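(* Fix $T,n_{\mathrm{in}},n_1\in\mathbb{N}$ and an architecture of discrete-time LIF-SNN (direct encoding, membrane potential output) with latency $T$, input dimension $n_{\mathrm{in}}$, $L$ hidden layers of widths $n_1,\dots,n_L$ and output dimension $n_{\mathrm{out}}$. Let $\theta$ range over all choices of the network parameters (weights, biases, initial membrane potentials, leaks, thresholds and decoder parameters). Then $\max_\theta|\mathcal{C}|\le\max_\theta|\mathcal{R}|\le B$, where $B=\sum_{i=0}^{n_{\mathrm{in}}}\big(\frac{T^2+T}{2}\big)^i\binom{n_1}{i}$ if $n_1\ge n_{\mathrm{in}}$ and $B=\big(\frac{T^2+T+2}{2}\big)^{n_1}$ otherwise. The first inequality becomes an equality if each hidden (spike) layer has at least $n_1$ neurons. The second inequality becomes an equality for appropriate choices of the network parameters $\theta$.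
   Context: A discrete-time LIF-SNN $\Phi$ with parameters $W^\ell\in\mathbb{R}^{n_\ell\times n_{\ell-1}}$, $b^\ell\in\mathbb{R}^{n_\ell}$, $u^\ell(0)\in\mathbb{R}^{n_\ell}$, $\beta^\ell\in[0,1]$, $\vartheta^\ell>0$ ($\ell\in[L]$, $n_0=n_{\mathrm{in}}$) and direct encoding computes, for input $x$, with $s^0(t)=x$ for all $t\in[T]$: $s^\ell(t)=H(\beta^\ell u^\ell(t-1)+W^\ell s^{\ell-1}(t)+b^\ell-\vartheta^\ell\mathbf{1})$, $u^\ell(t)=\beta^\ell u^\ell(t-1)+W^\ell s^{\ell-1}(t)+b^\ell-\vartheta^\ell s^\ell(t)$ for $\ell\in[L]$, $t\in[T]$, with $H$ the entrywise Heaviside function ($H(z)=1$ iff $z\ge0$). Membrane potential output: $R(\Phi)(x)=\sum_{t=1}^Ta_t(Vs^L(t)+c)$ with $a\in\mathbb{R}^T$, $V\in\mathbb{R}^{n_{\mathrm{out}}\times n_L}$, $c\in\mathbb{R}^{n_{\mathrm{out}}}$. The activation pattern of $x$ is $\mathcal{A}(x)=(s^1(t;x))_{t\in[T]}\in\{0,1\}^{n_1\times T}$ (first hidden layer spikes). $\mathcal{R}$ is the set of activation regions, i.e. the nonempty sets $\{x\in\mathbb{R}^{n_{\mathrm{in}}}:\mathcal{A}(x)=A\}$, $A\in\{0,1\}^{n_1\times T}$; $\mathcal{C}$ is the set of constant regions, i.e. the nonempty sets $\{x:R(\Phi)(x)=y\}$, $y\in\mathbb{R}^{n_{\mathrm{out}}}$.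 Both depend on $\theta$. *)

theory Defs
  imports Complex_Main
begin

text \<open>Parameters theta of a discrete-time LIF-SNN. Layers are indexed 1..L,
  neurons within layer l by 0..<n_l, time steps by 1..T.  Entries outside these
  index ranges are irrelevant to the computation.\<close>

record snn_params =
  snn_W :: "nat \<Rightarrow> nat \<Rightarrow> nat \<Rightarrow> real"   \<comment> \<open>layer l, row i, column j\<close>
  snn_b :: "nat \<Rightarrow> nat \<Rightarrow> real"
  snn_u0 :: "nat \<Rightarrow> nat \<Rightarrow> real"
  snn_beta :: "nat \<Rightarrow> real"
  snn_thr :: "nat \<Rightarrow> real"
  snn_a :: "nat \<Rightarrow> real"
  snn_V :: "nat \<Rightarrow> nat \<Rightarrow> real"
  snn_c :: "nat \<Rightarrow> real"

definition snn_valid :: "nat list \<Rightarrow> snn_params \<Rightarrow> bool" where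
  "snn_valid ns P \<longleftrightarrow>
     (\<forall>l\<in>{1..length ns}. 0 \<le> snn_beta P l \<and> snn_beta P l \<le> 1 \<and> 0 < snn_thr P l)"

definition width :: "nat \<Rightarrow> nat list \<Rightarrow> nat \<Rightarrow> nat" where
  "width n_in ns l = (if l = 0 then n_in else ns ! (l - 1))"

definition heaviside :: "real \<Rightarrow> real" where
  "heaviside z = (if 0 \<le> z then 1 else 0)"

text \<open>snn_st P n_in ns x l t = (s^l(t), u^l(t)) for input x (direct encoding).\<close>
fun snn_st :: "snn_params \<Rightarrow> nat \<Rightarrow> nat list \<Rightarrow> real list \<Rightarrow> nat \<Rightarrow> nat
                \<Rightarrow> (nat \<Rightarrow> real) \<times> (nat \<Rightarrow> real)" where
  "snn_st P n_in ns x 0 t = ((\<lambda>j. x ! j), (\<lambda>_. 0))"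
| "snn_st P n_in ns x (Suc l) 0 = ((\<lambda>_. 0), snn_u0 P (Suc l))"
| "snn_st P n_in ns x (Suc l) (Suc t) =
     (let up = snd (snn_st P n_in ns x (Suc l) t);
          sp = fst (snn_st P n_in ns x l (Suc t));
          pre = (\<lambda>i. snn_beta P (Suc l) * up i
                     + (\<Sum>j<width n_in ns l. snn_W P (Suc l) i j * sp j)
                     + snn_b P (Suc l) i);
          s = (\<lambda>i. heaviside (pre i - snn_thr P (Suc l)))
      in (s, (\<lambda>i. pre i - snn_thr P (Suc l) * s i)))"

definition snn_inputs :: "nat \<Rightarrow> real list set" where
  "snn_inputs n_in = {x. length x = n_in}"

definition snn_pattern :: "snn_params \<Rightarrow> nat \<Rightarrow> nat list \<Rightarrow> nat \<Rightarrow> real list \<Rightarrow> nat \<Rightarrow> nat \<Rightarrow> real" where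
  "snn_pattern P n_in ns T x =
     (\<lambda>t i. if 1 \<le> t \<and> t \<le> T \<and> i < hd ns then fst (snn_st P n_in ns x 1 t) i else 0)"

definition snn_output :: "snn_params \<Rightarrow> nat \<Rightarrow> nat list \<Rightarrow> nat \<Rightarrow> nat \<Rightarrow> real list \<Rightarrow> nat \<Rightarrow> real" where
  "snn_output P n_in ns n_out T x =
     (\<lambda>k. if k < n_out then
            (\<Sum>t=1..T. snn_a P t *
               ((\<Sum>j<last ns. snn_V P k j * fst (snn_st P n_in ns x (length ns) t) j) + snn_c P k))
          else 0)"

definition activation_regions :: "snn_params \<Rightarrow> nat \<Rightarrow> nat list \<Rightarrow> nat \<Rightarrow> real list set set" where
  "activation_regions P n_in ns T =
     {S. \<exists>A. S = {x \<in> snn_inputs n_in. snn_pattern P n_in ns T x = A} \<and> S \<noteq> {}}"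

definition constant_regions :: "snn_params \<Rightarrow> nat \<Rightarrow> nat list \<Rightarrow> nat \<Rightarrow> nat \<Rightarrow> real list set set" where
  "constant_regions P n_in ns n_out T =
     {S. \<exists>y. S = {x \<in> snn_inputs n_in. snn_output P n_in ns n_out T x = y} \<and> S \<noteq> {}}"

definition max_activation_regions :: "nat \<Rightarrow> nat list \<Rightarrow> nat \<Rightarrow> nat" where
  "max_activation_regions n_in ns T =
     Max {card (activation_regions P n_in ns T) | P. snn_valid ns P}"

definition max_constant_regions :: "nat \<Rightarrow> nat list \<Rightarrow> nat \<Rightarrow> nat \<Rightarrow> nat" where
  "max_constant_regions n_in ns n_out T =
     Max {card (constant_regions P n_in ns n_out T) | P. snn_valid ns P}"

definition region_bound :: "nat \<Rightarrow> nat \<Rightarrow> nat \<Rightarrow> real" where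
  "region_bound T n_in n1 =
     (if n1 \<ge> n_in
      then (\<Sum>i=0..n_in. ((real T ^ 2 + real T) / 2) ^ i * real (n1 choose i))
      else ((real T ^ 2 + real T + 2) / 2) ^ n1)"

end

theory Submission
  imports Defs "HOL-Computational_Algebra.Polynomial"
begin


fun nu :: "real \<Rightarrow> real \<Rightarrow> real \<Rightarrow> real \<Rightarrow> nat \<Rightarrow> real" where
  "nu b th u0 z 0 = u0"
| "nu b th u0 z (Suc t) = (if th \<le> b * nu b th u0 z t + z then b * nu b th u0 z t + z - th
                           else b * nu b th u0 z t + z)"

definition sp :: "real \<Rightarrow> real \<Rightarrow> real \<Rightarrow> real \<Rightarrow> nat \<Rightarrow> bool" where
  "sp b th u0 z t \<longleftrightarrow> th \<le> b * nu b th u0 z t + z"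

fun cnt :: "real \<Rightarrow> real \<Rightarrow> real \<Rightarrow> real \<Rightarrow> nat \<Rightarrow> nat" where
  "cnt b th u0 z 0 = 0"
| "cnt b th u0 z (Suc t) = cnt b th u0 z t + (if sp b th u0 z t then 1 else 0)"

fun scode :: "real \<Rightarrow> real \<Rightarrow> real \<Rightarrow> real \<Rightarrow> nat \<Rightarrow> nat" where
  "scode b th u0 z 0 = 0"
| "scode b th u0 z (Suc t) = 2 * scode b th u0 z t + (if sp b th u0 z t then 1 else 0)"

lemma cnt_le: "cnt b th u0 z t \<le> t"
  by (induction t) auto

lemma scode_lt: "scode b th u0 z t < 2 ^ t"
  by (induction t) auto

lemma mono_inv:
  assumes b: "0 \<le> b" "b \<le> 1" and th: "0 \<le> th" and zz: "z \<le> z'"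
  shows "cnt b th u0 z t \<le> cnt b th u0 z' t \<and>
         nu b th u0 z' t - nu b th u0 z t \<ge> - th * (real (cnt b th u0 z' t) - real (cnt b th u0 z t))"
proof (induction t)
  case 0 then show ?case by simp
next
  case (Suc t)
  define u where "u = nu b th u0 z t"
  define u' where "u' = nu b th u0 z' t"
  define D where "D = real (cnt b th u0 z' t) - real (cnt b th u0 z t)"
  have D0: "D \<ge> 0" using Suc by (simp add: D_def)
  have I: "u' - u \<ge> - th * D" using Suc by (simp add: u_def u'_def D_def)
  have bI: "b * (u' - u) \<ge> b * (- th * D)" using I b by (intro mult_left_mono) auto
  have tD: "b * (th * D) \<le> th * D" using b th D0
    by (metis mult_left_le_one_le mult_nonneg_nonneg)
  have pp: "(b * u' + z') - (b * u + z) \<ge> - th * D" using bI tD zz by (simp add: algebra_simps)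
  show ?case
  proof (cases "th \<le> b * u + z"; cases "th \<le> b * u' + z'")
    assume a1: "th \<le> b * u + z" and a2: "th \<le> b * u' + z'"
    then show ?thesis using Suc pp by (simp add: sp_def u_def u'_def D_def algebra_simps)
  next
    assume a1: "th \<le> b * u + z" and a2: "\<not> th \<le> b * u' + z'"
    have "D \<noteq> 0" using a1 a2 pp by auto
    then have "cnt b th u0 z t < cnt b th u0 z' t" using Suc by (auto simp: D_def)
    then show ?thesis using a1 a2 pp th
      by (simp add: sp_def u_def u'_def D_def algebra_simps of_nat_diff)
  next
    assume a1: "\<not> th \<le> b * u + z" and a2: "th \<le> b * u' + z'"
    then show ?thesis using Suc pp th by (simp add: sp_def u_def u'_def D_def algebra_simps)
  next
    assume a1: "\<not> th \<le> b * u + z" and a2: "\<not> th \<le> b * u' + z'"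
    then show ?thesis using Suc pp by (simp add: sp_def u_def u'_def D_def algebra_simps)
  qed
qed

lemma scode_eq_step:
  "scode b th u0 z (Suc t) = scode b th u0 z' (Suc t) \<Longrightarrow>
   scode b th u0 z t = scode b th u0 z' t \<and> (sp b th u0 z t \<longleftrightarrow> sp b th u0 z' t)"
  by (auto split: if_splits) presburger+

lemma scode_eq_cnt:
  "scode b th u0 z t = scode b th u0 z' t \<Longrightarrow> cnt b th u0 z t = cnt b th u0 z' t"
proof (induction t)
  case 0 then show ?case by simp
next
  case (Suc t) then show ?case using scode_eq_step[OF Suc.prems] by simp
qed

lemma scode_eq_sp:
  "scode b th u0 z t = scode b th u0 z' t \<Longrightarrow> k < t \<Longrightarrow> (sp b th u0 z k \<longleftrightarrow> sp b th u0 z' k)"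
proof (induction t)
  case 0 then show ?case by simp
next
  case (Suc t)
  from scode_eq_step[OF Suc.prems(1)] have "scode b th u0 z t = scode b th u0 z' t"
    "(sp b th u0 z t \<longleftrightarrow> sp b th u0 z' t)" by auto
  then show ?case using Suc by (cases "k = t") auto
qed

lemma scode_mono:
  assumes b: "0 \<le> b" "b \<le> 1" and th: "0 \<le> th" and zz: "z \<le> z'"
  shows "scode b th u0 z t \<le> scode b th u0 z' t"
proof (induction t)
  case 0 then show ?case by simp
next
  case (Suc t)
  show ?case
  proof (cases "scode b th u0 z t < scode b th u0 z' t")
    case True then show ?thesis by auto
  next
    case False
    then have eq: "scode b th u0 z t = scode b th u0 z' t" using Suc by simp
    then have "cnt b th u0 z t = cnt b th u0 z' t" by (rule scode_eq_cnt)
    then have "nu b th u0 z' t \<ge> nu b th u0 z t" using mono_inv[OF b th zz, of u0 t] by simp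
    then have "b * nu b th u0 z t + z \<le> b * nu b th u0 z' t + z'" using b zz
      by (meson add_mono mult_left_mono)
    then have "sp b th u0 z t \<Longrightarrow> sp b th u0 z' t" by (auto simp: sp_def)
    then show ?thesis using eq by auto
  qed
qed


lemma split_inj:
  assumes b: "0 \<le> b" "b \<le> 1" and th: "0 \<le> th"
    and c1: "scode b th u0 z1 t = c1" "sp b th u0 z1 t"
    and c2: "scode b th u0 z2 t = c2" "\<not> sp b th u0 z2 t"
    and lt: "c1 < c2"
  shows "cnt b th u0 z1 t \<noteq> cnt b th u0 z2 t"
proof
  assume eq: "cnt b th u0 z1 t = cnt b th u0 z2 t"
  have "z1 < z2"
  proof (rule ccontr)
    assume "\<not> z1 < z2"
    then have "scode b th u0 z2 t \<le> scode b th u0 z1 t" using scode_mono[OF b th] by simp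
    then show False using c1 c2 lt by simp
  qed
  then have "cnt b th u0 z1 (Suc t) \<le> cnt b th u0 z2 (Suc t)" using mono_inv[OF b th, of z1 z2 u0 "Suc t"] by simp
  then show False using eq c1 c2 by simp
qed

lemma card_range_code:
  assumes b: "0 \<le> b" "b \<le> 1" and th: "0 \<le> th"
  shows "card (range (\<lambda>z. scode b th u0 z t)) \<le> 1 + t * (t + 1) div 2"
proof (induction t)
  case 0
  have "range (\<lambda>z. scode b th u0 z 0) = {0}" by auto
  then show ?case by simp
next
  case (Suc t)
  define R where "R = range (\<lambda>z. scode b th u0 z t)"
  define Z0 where "Z0 = {c. \<exists>z. scode b th u0 z t = c \<and> \<not> sp b th u0 z t}"
  define Z1 where "Z1 = {c. \<exists>z. scode b th u0 z t = c \<and> sp b th u0 z t}"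
  have finR: "finite R" unfolding R_def
    by (rule finite_subset[of _ "{..<2^t}"]) (auto simp: scode_lt)
  have RU: "R = Z0 \<union> Z1" unfolding R_def Z0_def Z1_def by auto
  have fin0: "finite Z0" "finite Z1" using finR RU by auto
  have sub: "range (\<lambda>z. scode b th u0 z (Suc t)) \<subseteq> (\<lambda>c. 2*c) ` Z0 \<union> (\<lambda>c. 2*c+1) ` Z1"
  proof
    fix x assume "x \<in> range (\<lambda>z. scode b th u0 z (Suc t))"
    then obtain z where z: "x = scode b th u0 z (Suc t)" by auto
    show "x \<in> (\<lambda>c. 2*c) ` Z0 \<union> (\<lambda>c. 2*c+1) ` Z1"
    proof (cases "sp b th u0 z t")
      case True
      then have "scode b th u0 z t \<in> Z1" unfolding Z1_def by auto
      then show ?thesis using z True by auto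
    next
      case False
      then have "scode b th u0 z t \<in> Z0" unfolding Z0_def by auto
      then show ?thesis using z False by auto
    qed
  qed
  have "card (range (\<lambda>z. scode b th u0 z (Suc t))) \<le> card ((\<lambda>c. 2*c) ` Z0 \<union> (\<lambda>c. 2*c+1) ` Z1)"
    using sub fin0 by (intro card_mono) auto
  also have "\<dots> \<le> card ((\<lambda>c. 2*c) ` Z0) + card ((\<lambda>c. 2*c+1) ` Z1)" by (rule card_Un_le)
  also have "\<dots> \<le> card Z0 + card Z1" by (intro add_mono card_image_le fin0)
  also have "\<dots> = card R + card (Z0 \<inter> Z1)" using card_Un_Int[OF fin0] RU by simp
  also have "card (Z0 \<inter> Z1) \<le> t + 1"
  proof -
    define F where "F c = cnt b th u0 (SOME z. scode b th u0 z t = c) t" for c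
    have Fc: "F c = cnt b th u0 z t" if "scode b th u0 z t = c" for z c
    proof -
      have "scode b th u0 (SOME z. scode b th u0 z t = c) t = c" by (rule someI[of _ z]) (rule that)
      then show ?thesis unfolding F_def using that scode_eq_cnt by metis
    qed
    have "inj_on F (Z0 \<inter> Z1)"
    proof (rule inj_onI)
      fix c1 c2 assume h1: "c1 \<in> Z0 \<inter> Z1" and h2: "c2 \<in> Z0 \<inter> Z1" and eq: "F c1 = F c2"
      show "c1 = c2"
      proof (rule ccontr)
        assume ne: "c1 \<noteq> c2"
        have gen: False if g1: "ca < cb" and g2: "ca \<in> Z0 \<inter> Z1" and g3: "cb \<in> Z0 \<inter> Z1" and g4: "F ca = F cb" for ca cb
        proof -
          obtain za where "scode b th u0 za t = ca" "sp b th u0 za t" using g2 unfolding Z1_def by auto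
          moreover obtain zb where "scode b th u0 zb t = cb" "\<not> sp b th u0 zb t" using g3 unfolding Z0_def by auto
          ultimately show False using split_inj[OF b th] g1 g4 Fc by metis
        qed
        show False using ne gen[of c1 c2] gen[of c2 c1] h1 h2 eq by (metis linorder_neq_iff)
      qed
    qed
    moreover have "F ` (Z0 \<inter> Z1) \<subseteq> {0..t}" unfolding F_def using cnt_le by auto
    ultimately have "card (Z0 \<inter> Z1) \<le> card {0..t}"
      by (metis card_image card_mono finite_atLeastAtMost)
    then show ?thesis by simp
  qed
  finally have "card (range (\<lambda>z. scode b th u0 z (Suc t))) \<le> card R + (t + 1)" by simp
  then show ?case using Suc unfolding R_def by simp
qed

definition hl :: "real \<Rightarrow> real \<Rightarrow> real \<Rightarrow> nat \<Rightarrow> real \<Rightarrow> nat" where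
  "hl b th u0 T z = card {c \<in> range (\<lambda>z. scode b th u0 z T). c < scode b th u0 z T}"

lemma fin_range_code: "finite (range (\<lambda>z. scode b th u0 z t))"
  by (rule finite_subset[of _ "{..<2^t}"]) (auto simp: scode_lt)

lemma hl_mono:
  assumes "0 \<le> b" "b \<le> 1" "0 \<le> th"
  shows "mono (hl b th u0 T)"
proof (rule monoI)
  fix z z' :: real assume "z \<le> z'"
  then have "scode b th u0 z T \<le> scode b th u0 z' T" using scode_mono assms by blast
  then show "hl b th u0 T z \<le> hl b th u0 T z'" unfolding hl_def
    by (intro card_mono) (auto intro: finite_subset[OF _ fin_range_code])
qed

lemma hl_le:
  assumes "0 \<le> b" "b \<le> 1" "0 \<le> th"
  shows "hl b th u0 T z \<le> T * (T + 1) div 2"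
proof -
  have "{c \<in> range (\<lambda>z. scode b th u0 z T). c < scode b th u0 z T} \<subset> range (\<lambda>z. scode b th u0 z T)"
    by auto
  then have "hl b th u0 T z < card (range (\<lambda>z. scode b th u0 z T))"
    unfolding hl_def by (intro psubset_card_mono fin_range_code)
  then show ?thesis using card_range_code[OF assms, of u0 T] by simp
qed

lemma hl_inj:
  assumes "hl b th u0 T z = hl b th u0 T z'"
  shows "scode b th u0 z T = scode b th u0 z' T"
proof (rule ccontr)
  have gen: False if "scode b th u0 za T < scode b th u0 zb T" "hl b th u0 T za = hl b th u0 T zb" for za zb
  proof -
    have "{c \<in> range (\<lambda>z. scode b th u0 z T). c < scode b th u0 za T} \<subset>
          {c \<in> range (\<lambda>z. scode b th u0 z T). c < scode b th u0 zb T}"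
      using that(1) by auto
    then have "hl b th u0 T za < hl b th u0 T zb" unfolding hl_def
      by (intro psubset_card_mono) (auto intro: finite_subset[OF _ fin_range_code])
    then show False using that(2) by simp
  qed
  assume "scode b th u0 z T \<noteq> scode b th u0 z' T"
  then show False using gen[of z z'] gen[of z' z] assms by (metis linorder_neq_iff)
qed


definition aff :: "nat set \<Rightarrow> ((nat \<Rightarrow> real) \<Rightarrow> real) \<Rightarrow> bool" where
  "aff I f \<longleftrightarrow> (\<exists>a c. \<forall>y. f y = (\<Sum>j\<in>I. a j * y j) + c)"

definition NN :: "nat \<Rightarrow> nat \<Rightarrow> nat \<Rightarrow> nat" where
  "NN K d n = (\<Sum>j\<le>d. K ^ j * (n choose j))"

lemma NN_n0: "NN K d 0 = 1"
  unfolding NN_def by (induction d) auto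

lemma NN_d0: "NN K 0 n = 1"
  unfolding NN_def by simp

lemma NN_rec: "NN K (Suc d) (Suc n) = NN K (Suc d) n + K * NN K d n"
proof -
  have "NN K (Suc d) (Suc n) = 1 + (\<Sum>j\<le>d. K ^ Suc j * (Suc n choose Suc j))"
    unfolding NN_def by (subst sum.atMost_Suc_shift) simp
  also have "\<dots> = 1 + (\<Sum>j\<le>d. K ^ Suc j * (n choose Suc j)) + (\<Sum>j\<le>d. K ^ Suc j * (n choose j))"
    by (simp add: algebra_simps sum.distrib)
  also have "(\<Sum>j\<le>d. K ^ Suc j * (n choose j)) = K * NN K d n"
    unfolding NN_def by (simp add: sum_distrib_left algebra_simps)
  also have "1 + (\<Sum>j\<le>d. K ^ Suc j * (n choose Suc j)) = NN K (Suc d) n"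
    unfolding NN_def by (subst sum.atMost_Suc_shift) simp
  finally show ?thesis .
qed

lemma NN_mono: "NN K d n \<le> NN K d (Suc n)"
  unfolding NN_def
proof (intro sum_mono mult_left_mono)
  fix j show "n choose j \<le> Suc n choose j"
    by (cases j) auto
qed simp

lemma aff_comb:
  assumes "aff I f"
  shows "f (\<lambda>j. y1 j + t * (y2 j - y1 j)) = f y1 + t * (f y2 - f y1)"
proof -
  obtain a c where f: "\<And>y. f y = (\<Sum>j\<in>I. a j * y j) + c" using assms unfolding aff_def by blast
  have "(\<Sum>j\<in>I. a j * (y1 j + t * (y2 j - y1 j))) =
        (\<Sum>j\<in>I. a j * y1 j) + t * ((\<Sum>j\<in>I. a j * y2 j) - (\<Sum>j\<in>I. a j * y1 j))"
    by (simp add: algebra_simps sum.distrib sum_distrib_left sum_subtractf)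
  then show ?thesis unfolding f by (simp add: algebra_simps)
qed

lemma aff_empty: "aff {} f \<Longrightarrow> f y = f y'"
  unfolding aff_def by auto

lemma aff_phi:
  assumes "aff I g" "finite I" "j0 \<in> I" "a j0 \<noteq> 0"
  shows "aff (I - {j0}) (\<lambda>y. g (y(j0 := (C - (\<Sum>j\<in>I - {j0}. a j * y j)) / a j0)))"
proof -
  obtain a' c' where g: "\<And>y. g y = (\<Sum>j\<in>I. a' j * y j) + c'" using assms unfolding aff_def by blast
  define a'' where "a'' j = a' j - a' j0 * a j / a j0" for j
  define c'' where "c'' = c' + a' j0 * C / a j0"
  show ?thesis unfolding aff_def
  proof (intro exI allI)
    fix y
    let ?y = "y(j0 := (C - (\<Sum>j\<in>I - {j0}. a j * y j)) / a j0)"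
    have "(\<Sum>j\<in>I. a' j * ?y j) = a' j0 * ?y j0 + (\<Sum>j\<in>I - {j0}. a' j * ?y j)"
      using assms by (simp add: sum.remove)
    also have "(\<Sum>j\<in>I - {j0}. a' j * ?y j) = (\<Sum>j\<in>I - {j0}. a' j * y j)"
      by (rule sum.cong) auto
    finally have e: "(\<Sum>j\<in>I. a' j * ?y j) = a' j0 * ((C - (\<Sum>j\<in>I - {j0}. a j * y j)) / a j0)
        + (\<Sum>j\<in>I - {j0}. a' j * y j)" by simp
    have e2: "(\<Sum>j\<in>I - {j0}. a'' j * y j) = (\<Sum>j\<in>I - {j0}. a' j * y j) - a' j0 / a j0 * (\<Sum>j\<in>I - {j0}. a j * y j)"
      unfolding a''_def by (simp add: algebra_simps sum_subtractf sum_distrib_left)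
    show "g ?y = (\<Sum>j\<in>I - {j0}. a'' j * y j) + c''"
      unfolding g e e2 c''_def using assms(4) by (simp add: field_simps)
  qed
qed

lemma mono_between:
  fixes h :: "real \<Rightarrow> nat"
  assumes "mono h" "h p = h q" "0 \<le> t" "t \<le> 1"
  shows "h (p + t * (q - p)) = h p"
proof (cases "p \<le> q")
  case True
  have "p \<le> p + t * (q - p)" using True assms by simp
  moreover have "p + t * (q - p) \<le> q"
  proof -
    have "t * (q - p) \<le> 1 * (q - p)" using True assms by (intro mult_right_mono) auto
    then show ?thesis by simp
  qed
  ultimately show ?thesis using assms by (metis antisym monoD)
next
  case False
  have "p + t * (q - p) \<le> p" using False assms by (simp add: mult_nonneg_nonpos)
  moreover have "q \<le> p + t * (q - p)"
  proof -
    have "t * (p - q) \<le> 1 * (p - q)" using False assms by (intro mult_right_mono) auto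
    then show ?thesis by (simp add: algebra_simps)
  qed
  ultimately show ?thesis using assms by (metis antisym monoD)
qed

lemma card_swap:
  assumes "finite A" "finite B"
  shows "(\<Sum>x\<in>A. card {y\<in>B. P x y}) = (\<Sum>y\<in>B. card {x\<in>A. P x y})"
proof -
  have c: "card {y\<in>X. Q y} = (\<Sum>y\<in>X. if Q y then 1 else 0)" if "finite X" for X and Q :: "'c \<Rightarrow> bool"
    using that by (simp add: sum.If_cases Int_def)
  show ?thesis using assms by (simp add: c sum.swap[of _ B A])
qed


lemma fin_tuples:
  assumes "\<forall>i<n. \<forall>v. h i v \<le> (K::nat)"
  shows "finite (range (\<lambda>y. map (\<lambda>i. h i (f i y)) [0..<n]))"
proof (rule finite_subset[OF _ finite_lists_length_eq[of "{0..K}" n]])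
  show "range (\<lambda>y. map (\<lambda>i. h i (f i y)) [0..<n]) \<subseteq> {xs. set xs \<subseteq> {0..K} \<and> length xs = n}"
    using assms by auto
qed simp

lemma U_bound:
  fixes f :: "nat \<Rightarrow> (nat \<Rightarrow> real) \<Rightarrow> real" and h :: "nat \<Rightarrow> real \<Rightarrow> nat"
  assumes "finite I" "\<forall>i<n. aff I (f i)" "\<forall>i<n. mono (h i)" "\<forall>i<n. \<forall>v. h i v \<le> K"
  shows "card (range (\<lambda>y. map (\<lambda>i. h i (f i y)) [0..<n])) \<le> NN K (card I) n"
  using assms
proof (induction n arbitrary: I f)
  case 0
  have "range (\<lambda>y. map (\<lambda>i. h i (f i y)) [0..<0]) = {[]}" by auto
  then show ?case by (simp add: NN_n0)
next
  case (Suc n)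
  define tup where "tup y = map (\<lambda>i. h i (f i y)) [0..<n]" for y
  define g where "g y = h n (f n y)" for y
  have split: "map (\<lambda>i. h i (f i y)) [0..<Suc n] = tup y @ [g y]" for y
    unfolding tup_def g_def by simp
  define S' where "S' = range tup"
  have finS': "finite S'" unfolding S'_def tup_def using Suc.prems(4) by (intro fin_tuples[where K=K]) auto
  have IH1: "card S' \<le> NN K (card I) n" unfolding S'_def tup_def
    using Suc.IH[of I f] Suc.prems by auto
  define V where "V \<tau> = {g y | y. tup y = \<tau>}" for \<tau>
  have finV: "finite (V \<tau>)" for \<tau>
    by (rule finite_subset[of _ "{0..K}"]) (use Suc.prems(4) in \<open>auto simp: V_def g_def\<close>)
  have sub: "range (\<lambda>y. map (\<lambda>i. h i (f i y)) [0..<Suc n]) \<subseteq> (\<Union>\<tau>\<in>S'. (\<lambda>v. \<tau> @ [v]) ` V \<tau>)"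
    unfolding split S'_def V_def by blast
  have main: "card (range (\<lambda>y. map (\<lambda>i. h i (f i y)) [0..<Suc n])) \<le> (\<Sum>\<tau>\<in>S'. card (V \<tau>))"
  proof -
    have "card (range (\<lambda>y. map (\<lambda>i. h i (f i y)) [0..<Suc n])) \<le> card (\<Union>\<tau>\<in>S'. (\<lambda>v. \<tau> @ [v]) ` V \<tau>)"
      using sub finS' finV by (intro card_mono) auto
    also have "\<dots> \<le> (\<Sum>\<tau>\<in>S'. card ((\<lambda>v. \<tau> @ [v]) ` V \<tau>))" using finS' by (rule card_UN_le)
    also have "\<dots> \<le> (\<Sum>\<tau>\<in>S'. card (V \<tau>))" by (intro sum_mono card_image_le finV)
    finally show ?thesis .
  qed
  show ?case
  proof (cases "I = {}")
    case True
    have "range (\<lambda>y. map (\<lambda>i. h i (f i y)) [0..<Suc n]) \<subseteq> {map (\<lambda>i. h i (f i (\<lambda>_. 0))) [0..<Suc n]}"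
    proof (intro subsetI)
      fix x assume "x \<in> range (\<lambda>y. map (\<lambda>i. h i (f i y)) [0..<Suc n])"
      then obtain y where "x = map (\<lambda>i. h i (f i y)) [0..<Suc n]" by auto
      moreover have "f i y = f i (\<lambda>_. 0)" if "i < Suc n" for i
      proof -
        have "aff {} (f i)" using Suc.prems(2) True that by simp
        then show ?thesis by (rule aff_empty)
      qed
      ultimately show "x \<in> {map (\<lambda>i. h i (f i (\<lambda>_. 0))) [0..<Suc n]}" by (auto intro!: map_cong)
    qed
    then have "card (range (\<lambda>y. map (\<lambda>i. h i (f i y)) [0..<Suc n])) \<le> card {map (\<lambda>i. h i (f i (\<lambda>_. 0))) [0..<Suc n]}"
      by (intro card_mono) auto
    then have "card (range (\<lambda>y. map (\<lambda>i. h i (f i y)) [0..<Suc n])) \<le> 1" by simp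
    then show ?thesis using True by (simp add: NN_d0)
  next
    case False
    then obtain d where d: "card I = Suc d" using Suc.prems(1) by (metis card_gt_0_iff gr0_implies_Suc)
    have "aff I (f n)" using Suc.prems(2) by simp
    then obtain a c where fn: "\<And>y. f n y = (\<Sum>j\<in>I. a j * y j) + c" unfolding aff_def by blast
    show ?thesis
    proof (cases "\<forall>j\<in>I. a j = 0")
      case True
      have fc: "f n y = c" for y using fn True by simp
      have c1: "card (V \<tau>) \<le> 1" for \<tau>
      proof -
        have "V \<tau> \<subseteq> {h n c}" unfolding V_def g_def using fc by auto
        then have "card (V \<tau>) \<le> card {h n c}" by (intro card_mono) auto
        then show ?thesis by simp
      qed
      then have "(\<Sum>\<tau>\<in>S'. card (V \<tau>)) \<le> (\<Sum>\<tau>\<in>S'. 1)" by (intro sum_mono)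
      then have "(\<Sum>\<tau>\<in>S'. card (V \<tau>)) \<le> card S'" by simp
      then show ?thesis using main IH1 NN_mono[of K "card I" n] by linarith
    next
      case False
      then obtain j0 where j0: "j0 \<in> I" "a j0 \<noteq> 0" by auto
      define ck where "ck k = Inf {v. k \<le> h n v}" for k
      define phi where "phi k y = y(j0 := (ck k - c - (\<Sum>j\<in>I - {j0}. a j * y j)) / a j0)" for k y
      define Rk where "Rk k = range (\<lambda>y. tup (phi k y))" for k
      have cardRk: "card (Rk k) \<le> NN K d n" for k
      proof -
        have "card (range (\<lambda>y. map (\<lambda>i. h i ((\<lambda>i y. f i (phi k y)) i y)) [0..<n])) \<le> NN K (card (I - {j0})) n"
        proof (rule Suc.IH)
          show "finite (I - {j0})" using Suc.prems by auto
          show "\<forall>i<n. aff (I - {j0}) (\<lambda>y. f i (phi k y))"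
            unfolding phi_def using Suc.prems(1,2) j0 by (auto intro!: aff_phi)
        qed (use Suc.prems in auto)
        then show ?thesis unfolding Rk_def tup_def using d j0 Suc.prems(1) by simp
      qed
      have key: "card (V \<tau>) \<le> 1 + card {k \<in> {1..K}. \<tau> \<in> Rk k}" if "\<tau> \<in> S'" for \<tau>
      proof -
        have ne: "V \<tau> \<noteq> {}" using that unfolding S'_def V_def by auto
        define m1 where "m1 = Min (V \<tau>)"
        define m2 where "m2 = Max (V \<tau>)"
        have "m1 \<in> V \<tau>" "m2 \<in> V \<tau>" using ne finV unfolding m1_def m2_def by auto
        then obtain y1 y2 where y1: "tup y1 = \<tau>" "g y1 = m1" and y2: "tup y2 = \<tau>" "g y2 = m2"
          unfolding V_def by auto
        have Vsub: "V \<tau> \<subseteq> {m1..m2}" using finV unfolding m1_def m2_def by auto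
        have "{m1<..m2} \<subseteq> {k \<in> {1..K}. \<tau> \<in> Rk k}"
        proof
          fix k assume k: "k \<in> {m1<..m2}"
          have "m2 \<le> K" using Suc.prems(4) y2(2) unfolding g_def by (metis lessI)
          then have kK: "k \<in> {1..K}" using k by auto
          have hlt: "h n (f n y1) < k" "k \<le> h n (f n y2)" using k y1 y2 unfolding g_def by auto
          have monoh: "mono (h n)" using Suc.prems(3) by auto
          have lt: "f n y1 < f n y2"
          proof (rule ccontr)
            assume "\<not> f n y1 < f n y2"
            then have "h n (f n y2) \<le> h n (f n y1)" using monoh by (simp add: monoD)
            then show False using hlt by simp
          qed
          define Sk where "Sk = {v. k \<le> h n v}"
          have in2: "f n y2 \<in> Sk" using hlt unfolding Sk_def by simp
          have lb: "f n y1 \<le> v" if "v \<in> Sk" for v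
          proof (rule ccontr)
            assume "\<not> f n y1 \<le> v"
            then have "h n v \<le> h n (f n y1)" using monoh by (simp add: monoD)
            then show False using that hlt unfolding Sk_def by simp
          qed
          have c1: "f n y1 \<le> ck k" unfolding ck_def Sk_def[symmetric]
            using in2 lb by (intro cInf_greatest) auto
          have c2: "ck k \<le> f n y2" unfolding ck_def Sk_def[symmetric]
            using in2 lb by (intro cInf_lower) (auto simp: bdd_below_def)
          define t where "t = (ck k - f n y1) / (f n y2 - f n y1)"
          have t01: "0 \<le> t" "t \<le> 1" using lt c1 c2 unfolding t_def by (auto simp: field_simps)
          define y where "y = (\<lambda>j. y1 j + t * (y2 j - y1 j))"
          have fy: "f i y = f i y1 + t * (f i y2 - f i y1)" if "i < Suc n" for i
            unfolding y_def using Suc.prems(2) that by (intro aff_comb) auto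
          have "t * (f n y2 - f n y1) = ck k - f n y1" unfolding t_def using lt by simp
          then have fny: "f n y = ck k" using fy[of n] by simp
          have "tup y = \<tau>"
          proof -
            have "h i (f i y) = h i (f i y1)" if "i < n" for i
            proof -
              have hh: "h i (f i y1) = h i (f i y2)"
              proof -
                have "tup y1 ! i = tup y2 ! i" using y1(1) y2(1) by simp
                then show ?thesis using that unfolding tup_def by simp
              qed
              show ?thesis using fy[of i] that mono_between[OF _ hh t01] Suc.prems(3) by auto
            qed
            then have "tup y = tup y1" unfolding tup_def by (intro map_cong) auto
            then show ?thesis using y1 by simp
          qed
          moreover have "phi k y = y"
          proof -
            have "(\<Sum>j\<in>I. a j * y j) = a j0 * y j0 + (\<Sum>j\<in>I - {j0}. a j * y j)"
              using Suc.prems(1) j0 by (simp add: sum.remove)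
            then have "y j0 = (ck k - c - (\<Sum>j\<in>I - {j0}. a j * y j)) / a j0"
              using fny fn[of y] j0 by (simp add: field_simps)
            then show ?thesis unfolding phi_def by auto
          qed
          ultimately have "\<tau> \<in> Rk k" unfolding Rk_def by (metis rangeI)
          then show "k \<in> {k \<in> {1..K}. \<tau> \<in> Rk k}" using kK by simp
        qed
        then have "card {m1<..m2} \<le> card {k \<in> {1..K}. \<tau> \<in> Rk k}" by (intro card_mono) auto
        moreover have "card (V \<tau>) \<le> card {m1..m2}" using Vsub by (intro card_mono) auto
        ultimately show ?thesis by simp
      qed
      have "(\<Sum>\<tau>\<in>S'. card (V \<tau>)) \<le> (\<Sum>\<tau>\<in>S'. 1 + card {k \<in> {1..K}. \<tau> \<in> Rk k})"
        using key by (intro sum_mono) auto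
      also have "\<dots> = card S' + (\<Sum>\<tau>\<in>S'. card {k \<in> {1..K}. \<tau> \<in> Rk k})"
        by (simp only: sum.distrib card_eq_sum)
      also have "(\<Sum>\<tau>\<in>S'. card {k \<in> {1..K}. \<tau> \<in> Rk k}) = (\<Sum>k\<in>{1..K}. card {\<tau> \<in> S'. \<tau> \<in> Rk k})"
        using finS' by (intro card_swap) auto
      also have "\<dots> \<le> (\<Sum>k\<in>{1..K}. NN K d n)"
      proof (intro sum_mono)
        fix k
        have "finite (Rk k)" unfolding Rk_def tup_def using Suc.prems(4) by (intro fin_tuples[where K=K]) auto
        then have "card {\<tau> \<in> S'. \<tau> \<in> Rk k} \<le> card (Rk k)" by (intro card_mono) auto
        then show "card {\<tau> \<in> S'. \<tau> \<in> Rk k} \<le> NN K d n" using cardRk[of k] by simp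
      qed
      also have "\<dots> = K * NN K d n" by simp
      finally have "(\<Sum>\<tau>\<in>S'. card (V \<tau>)) \<le> card S' + K * NN K d n" by simp
      then show ?thesis using main IH1 d NN_rec[of K d n] by simp
    qed
  qed
qed


definition zin :: "snn_params \<Rightarrow> nat \<Rightarrow> real list \<Rightarrow> nat \<Rightarrow> real" where
  "zin P n_in x i = (\<Sum>j<n_in. snn_W P 1 i j * x ! j) + snn_b P 1 i"

lemma layer1_snd:
  "snd (snn_st P n_in ns x (Suc 0) t) i = nu (snn_beta P 1) (snn_thr P 1) (snn_u0 P 1 i) (zin P n_in x i) t"
proof (induction t)
  case 0
  show ?case by simp
next
  case (Suc t)
  then show ?case
    by (simp add: Let_def heaviside_def width_def zin_def)
qed

lemma layer1:
  "fst (snn_st P n_in ns x (Suc 0) (Suc t)) i =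
     (if sp (snn_beta P 1) (snn_thr P 1) (snn_u0 P 1 i) (zin P n_in x i) t then 1 else 0)"
  using layer1_snd[of P n_in ns x t i]
  by (simp add: Let_def heaviside_def width_def zin_def sp_def)

lemma pattern_eq:
  "snn_pattern P n_in ns T x = (\<lambda>t i. if 1 \<le> t \<and> t \<le> T \<and> i < hd ns then
      (if sp (snn_beta P 1) (snn_thr P 1) (snn_u0 P 1 i) (zin P n_in x i) (t - 1) then 1 else 0) else 0)"
proof (intro ext)
  fix t i
  show "snn_pattern P n_in ns T x t i = (if 1 \<le> t \<and> t \<le> T \<and> i < hd ns then
      (if sp (snn_beta P 1) (snn_thr P 1) (snn_u0 P 1 i) (zin P n_in x i) (t - 1) then 1 else 0) else 0)"
  proof (cases "1 \<le> t")
    case True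
    then obtain t' where "t = Suc t'" by (cases t) auto
    then show ?thesis unfolding snn_pattern_def using layer1[of P n_in ns x t' i] by simp
  qed (simp add: snn_pattern_def)
qed

lemma card_factor:
  assumes "finite (F ` A)" "\<And>x y. x \<in> A \<Longrightarrow> y \<in> A \<Longrightarrow> F x = F y \<Longrightarrow> G x = G y"
  shows "card (G ` A) \<le> card (F ` A)"
proof -
  have "G ` A = (\<lambda>v. G (SOME x. x \<in> A \<and> F x = v)) ` (F ` A)"
  proof (intro set_eqI iffI)
    fix w assume "w \<in> G ` A"
    then obtain x where x: "x \<in> A" "w = G x" by auto
    have "(SOME y. y \<in> A \<and> F y = F x) \<in> A \<and> F (SOME y. y \<in> A \<and> F y = F x) = F x"
      by (rule someI[of _ x]) (use x in auto)
    then have "G (SOME y. y \<in> A \<and> F y = F x) = G x" using assms(2) x by blast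
    then show "w \<in> (\<lambda>v. G (SOME x. x \<in> A \<and> F x = v)) ` (F ` A)" using x by force
  next
    fix w assume "w \<in> (\<lambda>v. G (SOME x. x \<in> A \<and> F x = v)) ` (F ` A)"
    then obtain x where x: "x \<in> A" "w = G (SOME y. y \<in> A \<and> F y = F x)" by auto
    have "(SOME y. y \<in> A \<and> F y = F x) \<in> A \<and> F (SOME y. y \<in> A \<and> F y = F x) = F x"
      by (rule someI[of _ x]) (use x in auto)
    then show "w \<in> G ` A" using x by auto
  qed
  then show ?thesis by (metis card_image_le assms(1))
qed

lemma card_regions:
  "card {S. \<exists>A. S = {x \<in> X. g x = A} \<and> S \<noteq> {}} = card (g ` X)"
proof -
  have e: "{S. \<exists>A. S = {x \<in> X. g x = A} \<and> S \<noteq> {}} = (\<lambda>A. {x \<in> X. g x = A}) ` (g ` X)"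
    by auto
  have "inj_on (\<lambda>A. {x \<in> X. g x = A}) (g ` X)"
  proof (rule inj_onI)
    fix A B assume "A \<in> g ` X" "B \<in> g ` X" and eq: "{x \<in> X. g x = A} = {x \<in> X. g x = B}"
    then obtain x where "x \<in> X" "g x = A" by auto
    then show "A = B" using eq by blast
  qed
  then show ?thesis unfolding e by (rule card_image)
qed

lemma act_card:
  "card (activation_regions P n_in ns T) = card (snn_pattern P n_in ns T ` snn_inputs n_in)"
  unfolding activation_regions_def by (rule card_regions)

lemma const_card:
  "card (constant_regions P n_in ns n_out T) = card (snn_output P n_in ns n_out T ` snn_inputs n_in)"
  unfolding constant_regions_def by (rule card_regions)

definition KK :: "nat \<Rightarrow> nat" where "KK T = T * (T + 1) div 2"

lemma upper:
  assumes "0 \<le> snn_beta P 1" "snn_beta P 1 \<le> 1" "0 \<le> snn_thr P 1"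
  shows "card (activation_regions P n_in ns T) \<le> NN (KK T) n_in (hd ns)"
proof -
  define b th where "b = snn_beta P 1" and "th = snn_thr P 1"
  define h where "h i = hl b th (snn_u0 P 1 i) T" for i
  define f where "f i y = (\<Sum>j\<in>{..<n_in}. snn_W P 1 i j * y j) + snn_b P 1 i" for i and y :: "nat \<Rightarrow> real"
  define tup where "tup y = map (\<lambda>i. h i (f i y)) [0..<hd ns]" for y
  have fz: "f i (\<lambda>j. x ! j) = zin P n_in x i" for i x unfolding f_def zin_def by simp
  have bnd: "card (range tup) \<le> NN (KK T) (card {..<n_in}) (hd ns)"
    unfolding tup_def
  proof (rule U_bound)
    show "\<forall>i<hd ns. aff {..<n_in} (f i)" unfolding aff_def f_def by blast
    show "\<forall>i<hd ns. mono (h i)" unfolding h_def b_def th_def using assms by (auto intro: hl_mono)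
    show "\<forall>i<hd ns. \<forall>v. h i v \<le> KK T" unfolding h_def b_def th_def KK_def using assms hl_le by blast
  qed simp
  have fin: "finite (range tup)" unfolding tup_def
    using assms hl_le by (intro fin_tuples[where K="KK T"]) (unfold h_def b_def th_def KK_def, blast)
  have "card (snn_pattern P n_in ns T ` snn_inputs n_in) \<le> card ((\<lambda>x. tup (\<lambda>j. x ! j)) ` snn_inputs n_in)"
  proof (rule card_factor)
    show "finite ((\<lambda>x. tup (\<lambda>j. x ! j)) ` snn_inputs n_in)"
      by (rule finite_subset[OF _ fin]) auto
    fix x y assume eq: "tup (\<lambda>j. x ! j) = tup (\<lambda>j. y ! j)"
    have "scode b th (snn_u0 P 1 i) (zin P n_in x i) T = scode b th (snn_u0 P 1 i) (zin P n_in y i) T"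
      if "i < hd ns" for i
    proof -
      have "tup (\<lambda>j. x ! j) ! i = tup (\<lambda>j. y ! j) ! i" using eq by simp
      then have "h i (zin P n_in x i) = h i (zin P n_in y i)" using that unfolding tup_def fz by simp
      then show ?thesis unfolding h_def by (rule hl_inj)
    qed
    then have "sp b th (snn_u0 P 1 i) (zin P n_in x i) (t - 1) = sp b th (snn_u0 P 1 i) (zin P n_in y i) (t - 1)"
      if "i < hd ns" "1 \<le> t" "t \<le> T" for i t
      using scode_eq_sp[of b th "snn_u0 P 1 i" "zin P n_in x i" T "zin P n_in y i" "t - 1"] that by simp
    then show "snn_pattern P n_in ns T x = snn_pattern P n_in ns T y"
      unfolding pattern_eq b_def th_def by (intro ext) auto
  qed
  also have "\<dots> \<le> card (range tup)" by (intro card_mono fin) auto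
  finally show ?thesis using bnd act_card by simp
qed


lemma layer1_0: "fst (snn_st P n_in ns x (Suc 0) 0) = (\<lambda>_. 0)" by simp

lemma same_pattern_layer1:
  assumes "snn_pattern P n_in ns T x = snn_pattern P n_in ns T x'" "t \<le> T" "j < hd ns"
  shows "fst (snn_st P n_in ns x (Suc 0) t) j = fst (snn_st P n_in ns x' (Suc 0) t) j"
proof (cases t)
  case 0 then show ?thesis by simp
next
  case (Suc t')
  have "snn_pattern P n_in ns T x t j = snn_pattern P n_in ns T x' t j" using assms by simp
  then show ?thesis using assms Suc unfolding snn_pattern_def by simp
qed

definition stepf :: "snn_params \<Rightarrow> nat \<Rightarrow> nat list \<Rightarrow> nat \<Rightarrow> (nat \<Rightarrow> real) \<Rightarrow> (nat \<Rightarrow> real)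
    \<Rightarrow> (nat \<Rightarrow> real) \<times> (nat \<Rightarrow> real)" where
  "stepf P n_in ns l up spv =
     (let pre = (\<lambda>i. snn_beta P (Suc l) * up i
                     + (\<Sum>j<width n_in ns l. snn_W P (Suc l) i j * spv j)
                     + snn_b P (Suc l) i);
          s = (\<lambda>i. heaviside (pre i - snn_thr P (Suc l)))
      in (s, (\<lambda>i. pre i - snn_thr P (Suc l) * s i)))"

lemma st_step:
  "snn_st P n_in ns x (Suc l) (Suc t) =
     stepf P n_in ns l (snd (snn_st P n_in ns x (Suc l) t)) (fst (snn_st P n_in ns x l (Suc t)))"
  by (simp only: snn_st.simps(3) stepf_def Let_def)

lemma stepf_cong:
  assumes "\<forall>j<width n_in ns l. spv j = spv' j"
  shows "stepf P n_in ns l up spv = stepf P n_in ns l up spv'"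
proof -
  have "(\<Sum>j<width n_in ns l. snn_W P (Suc l) i j * spv j) = (\<Sum>j<width n_in ns l. snn_W P (Suc l) i j * spv' j)" for i
    using assms by (intro sum.cong) auto
  then show ?thesis unfolding stepf_def Let_def by simp
qed

lemma same_pattern_deep:
  assumes pat: "snn_pattern P n_in ns T x = snn_pattern P n_in ns T x'" and ne: "ns \<noteq> []"
  shows "\<forall>t\<le>T. snn_st P n_in ns x (Suc (Suc l)) t = snn_st P n_in ns x' (Suc (Suc l)) t"
proof (induction l)
  case 0
  show ?case
  proof (intro allI impI)
    fix t assume "t \<le> T"
    then show "snn_st P n_in ns x (Suc (Suc 0)) t = snn_st P n_in ns x' (Suc (Suc 0)) t"
    proof (induction t)
      case 0 then show ?case by (simp only: snn_st.simps(2))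
    next
      case (Suc t)
      have w: "width n_in ns (Suc 0) = hd ns" using ne by (simp add: width_def hd_conv_nth)
      have "\<forall>j<width n_in ns (Suc 0). fst (snn_st P n_in ns x (Suc 0) (Suc t)) j = fst (snn_st P n_in ns x' (Suc 0) (Suc t)) j"
        unfolding w using same_pattern_layer1[OF pat Suc.prems] by simp
      then show ?case unfolding st_step[of P n_in ns x "Suc 0" t] st_step[of P n_in ns x' "Suc 0" t]
        using Suc.IH Suc.prems by (metis Suc_leD stepf_cong)
    qed
  qed
next
  case (Suc l)
  show ?case
  proof (intro allI impI)
    fix t assume "t \<le> T"
    then show "snn_st P n_in ns x (Suc (Suc (Suc l))) t = snn_st P n_in ns x' (Suc (Suc (Suc l))) t"
    proof (induction t)
      case 0 then show ?case by (simp only: snn_st.simps(2))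
    next
      case (Suc t)
      have "snn_st P n_in ns x (Suc (Suc l)) (Suc t) = snn_st P n_in ns x' (Suc (Suc l)) (Suc t)"
        using Suc.prems \<open>\<forall>t\<le>T. snn_st P n_in ns x (Suc (Suc l)) t = snn_st P n_in ns x' (Suc (Suc l)) t\<close> by blast
      moreover have "snn_st P n_in ns x (Suc (Suc (Suc l))) t = snn_st P n_in ns x' (Suc (Suc (Suc l))) t"
        using Suc.IH Suc.prems by simp
      ultimately show ?case unfolding st_step[of P n_in ns x "Suc (Suc l)" t] st_step[of P n_in ns x' "Suc (Suc l)" t]
        by simp
    qed
  qed
qed

lemma same_pattern_output:
  assumes pat: "snn_pattern P n_in ns T x = snn_pattern P n_in ns T x'" and ne: "ns \<noteq> []"
  shows "snn_output P n_in ns n_out T x = snn_output P n_in ns n_out T x'"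
proof -
  have key: "fst (snn_st P n_in ns x (length ns) t) j = fst (snn_st P n_in ns x' (length ns) t) j"
    if tt: "t \<le> T" and jj: "j < last ns" for t j
  proof (cases "length ns")
    case 0 then show ?thesis using ne by simp
  next
    case (Suc m)
    show ?thesis
    proof (cases m)
      case 0
      then have "last ns = hd ns" using Suc by (cases ns) auto
      then have "j < hd ns" using jj by simp
      from same_pattern_layer1[OF pat tt this] show ?thesis using Suc 0 by simp
    next
      case (Suc l)
      then have L: "length ns = Suc (Suc l)" using \<open>length ns = Suc m\<close> by simp
      have "snn_st P n_in ns x (Suc (Suc l)) t = snn_st P n_in ns x' (Suc (Suc l)) t"
        using same_pattern_deep[OF pat ne, of l] tt by blast
      then show ?thesis unfolding L by simp
    qed
  qed
  show ?thesis unfolding snn_output_def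
  proof (intro ext)
    fix k
    have "(\<Sum>t = 1..T. snn_a P t * ((\<Sum>j<last ns. snn_V P k j * fst (snn_st P n_in ns x (length ns) t) j) + snn_c P k)) =
          (\<Sum>t = 1..T. snn_a P t * ((\<Sum>j<last ns. snn_V P k j * fst (snn_st P n_in ns x' (length ns) t) j) + snn_c P k))"
    proof (rule sum.cong)
      fix t assume "t \<in> {1..T}"
      then have "(\<Sum>j<last ns. snn_V P k j * fst (snn_st P n_in ns x (length ns) t) j) =
                 (\<Sum>j<last ns. snn_V P k j * fst (snn_st P n_in ns x' (length ns) t) j)"
        using key by (intro sum.cong) auto
      then show "snn_a P t * ((\<Sum>j<last ns. snn_V P k j * fst (snn_st P n_in ns x (length ns) t) j) + snn_c P k) =
                 snn_a P t * ((\<Sum>j<last ns. snn_V P k j * fst (snn_st P n_in ns x' (length ns) t) j) + snn_c P k)"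
        by simp
    qed simp
    then show "(if k < n_out then \<Sum>t = 1..T. snn_a P t * ((\<Sum>j<last ns. snn_V P k j * fst (snn_st P n_in ns x (length ns) t) j) + snn_c P k) else 0) =
               (if k < n_out then \<Sum>t = 1..T. snn_a P t * ((\<Sum>j<last ns. snn_V P k j * fst (snn_st P n_in ns x' (length ns) t) j) + snn_c P k) else 0)"
      by simp
  qed
qed

lemma finite_factor:
  assumes "finite (F ` A)" "\<And>x y. x \<in> A \<Longrightarrow> y \<in> A \<Longrightarrow> F x = F y \<Longrightarrow> G x = G y"
  shows "finite (G ` A)"
proof -
  have "G ` A \<subseteq> (\<lambda>v. G (SOME x. x \<in> A \<and> F x = v)) ` (F ` A)"
  proof
    fix w assume "w \<in> G ` A"
    then obtain x where x: "x \<in> A" "w = G x" by auto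
    have "(SOME y. y \<in> A \<and> F y = F x) \<in> A \<and> F (SOME y. y \<in> A \<and> F y = F x) = F x"
      by (rule someI[of _ x]) (use x in auto)
    then have "G (SOME y. y \<in> A \<and> F y = F x) = G x" using assms(2) x by blast
    then show "w \<in> (\<lambda>v. G (SOME x. x \<in> A \<and> F x = v)) ` (F ` A)" using x by force
  qed
  then show ?thesis using assms(1) by (meson finite_imageI finite_subset)
qed

lemma finite_patterns: "finite (snn_pattern P n_in ns T ` X)"
proof -
  have "snn_pattern P n_in ns T ` X \<subseteq>
        (\<lambda>S. \<lambda>t i. if (t, i) \<in> S then 1 else 0) ` Pow ({1..T} \<times> {..<hd ns})"
  proof
    fix p assume "p \<in> snn_pattern P n_in ns T ` X"
    then obtain x where p: "p = snn_pattern P n_in ns T x" by auto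
    define S where "S = {(t, i). t \<in> {1..T} \<and> i < hd ns \<and> p t i = 1}"
    have "p = (\<lambda>t i. if (t, i) \<in> S then 1 else 0)"
    proof (intro ext)
      fix t i show "p t i = (if (t, i) \<in> S then 1 else 0)"
        unfolding S_def p pattern_eq by auto
    qed
    moreover have "S \<in> Pow ({1..T} \<times> {..<hd ns})" unfolding S_def by auto
    ultimately show "p \<in> (\<lambda>S. \<lambda>t i. if (t, i) \<in> S then 1 else 0) ` Pow ({1..T} \<times> {..<hd ns})" by blast
  qed
  then show ?thesis by (rule finite_subset) auto
qed

lemma const_le_act:
  assumes "ns \<noteq> []"
  shows "card (constant_regions P n_in ns n_out T) \<le> card (activation_regions P n_in ns T)"
  unfolding const_card act_card
proof (rule card_factor)
  show "finite (snn_pattern P n_in ns T ` snn_inputs n_in)" by (rule finite_patterns)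
  fix x y assume "snn_pattern P n_in ns T x = snn_pattern P n_in ns T y"
  then show "snn_output P n_in ns n_out T x = snn_output P n_in ns n_out T y"
    by (rule same_pattern_output[OF _ assms])
qed


lemma digits_lt:
  fixes d :: "nat \<Rightarrow> nat"
  assumes "\<forall>t<n. d t < B"
  shows "(\<Sum>t<n. B ^ t * d t) < B ^ n"
  using assms
proof (induction n)
  case 0 then show ?case by simp
next
  case (Suc n)
  have "(\<Sum>t<n. B ^ t * d t) < B ^ n" using Suc by simp
  moreover have "B ^ n * d n + B ^ n \<le> B ^ n * B"
  proof -
    have "d n < B" using Suc.prems by simp
    then have "d n + 1 \<le> B" by simp
    then have "B ^ n * (d n + 1) \<le> B ^ n * B" by (rule mult_le_mono2)
    then show ?thesis by (simp add: algebra_simps)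
  qed
  ultimately show ?case by (simp add: algebra_simps)
qed

lemma digits_inj:
  fixes d d' :: "nat \<Rightarrow> nat"
  assumes "\<forall>t<n. d t < B" "\<forall>t<n. d' t < B" "(\<Sum>t<n. B ^ t * d t) = (\<Sum>t<n. B ^ t * d' t)"
  shows "\<forall>t<n. d t = d' t"
  using assms
proof (induction n)
  case 0 then show ?case by simp
next
  case (Suc n)
  define S where "S = (\<Sum>t<n. B ^ t * d t)"
  define S' where "S' = (\<Sum>t<n. B ^ t * d' t)"
  have p1: "\<forall>t<n. d t < B" "\<forall>t<n. d' t < B" using Suc.prems(1,2) by auto
  have lt1: "S < B ^ n" unfolding S_def using p1(1) by (rule digits_lt)
  have lt2: "S' < B ^ n" unfolding S'_def using p1(2) by (rule digits_lt)
  have Bn: "B ^ n \<noteq> 0" using lt1 by (metis not_less0)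
  have eq: "S + B ^ n * d n = S' + B ^ n * d' n" using Suc.prems(3) unfolding S_def S'_def by simp
  have q1: "(S + B ^ n * d n) div B ^ n = d n + S div B ^ n" by (rule div_mult_self2[OF Bn])
  have q2: "(S' + B ^ n * d' n) div B ^ n = d' n + S' div B ^ n" by (rule div_mult_self2[OF Bn])
  have "S div B ^ n = 0" using lt1 by (rule div_less)
  moreover have "S' div B ^ n = 0" using lt2 by (rule div_less)
  ultimately have dn: "d n = d' n" using eq q1 q2 by simp
  then have "S = S'" using eq by simp
  then have "\<forall>t<n. d t = d' t" using Suc.IH p1 unfolding S_def S'_def by blast
  then show ?case using dn less_Suc_eq by auto
qed

definition mkP :: "snn_params \<Rightarrow> nat \<Rightarrow> snn_params" where
  "mkP P n1 = P\<lparr> snn_W := (\<lambda>l i j. if l = 1 then snn_W P 1 i j else if i = j \<and> i < n1 then 1 else 0),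
     snn_b := (\<lambda>l i. if l = 1 then snn_b P 1 i else 0),
     snn_u0 := (\<lambda>l i. if l = 1 then snn_u0 P 1 i else 0),
     snn_beta := (\<lambda>l. if l = 1 then snn_beta P 1 else 0),
     snn_thr := (\<lambda>l. if l = 1 then snn_thr P 1 else 1),
     snn_a := (\<lambda>t. (2 ^ n1) ^ (t - 1)),
     snn_V := (\<lambda>k j. if k = 0 \<and> j < n1 then 2 ^ j else 0),
     snn_c := (\<lambda>_. 0) \<rparr>"

lemma mkP_sel:
  "snn_W (mkP P n1) 1 = snn_W P 1" "snn_b (mkP P n1) 1 = snn_b P 1" "snn_u0 (mkP P n1) 1 = snn_u0 P 1"
  "snn_beta (mkP P n1) 1 = snn_beta P 1" "snn_thr (mkP P n1) 1 = snn_thr P 1"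
  by (auto simp: mkP_def)

lemma mkP_zin: "zin (mkP P n1) n_in x i = zin P n_in x i"
  unfolding zin_def using mkP_sel by simp

lemma mkP_pattern: "snn_pattern (mkP P n1) n_in ns T = snn_pattern P n_in ns T"
  unfolding pattern_eq mkP_zin mkP_sel ..

lemma mkP_valid: "snn_valid ns P \<Longrightarrow> snn_valid ns (mkP P n1)"
  unfolding snn_valid_def by (auto simp: mkP_def)

lemma layer1_01: "fst (snn_st P n_in ns x (Suc 0) t) i \<in> {0, 1}"
proof (cases t)
  case 0 then show ?thesis by (simp only: snn_st.simps(2) fst_conv) simp
next
  case (Suc t') then show ?thesis by (simp only: layer1) simp
qed

lemma mkP_ident:
  assumes "Suc l \<le> length ns" "\<forall>n\<in>set ns. n1 \<le> n" "i < n1"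
  shows "fst (snn_st (mkP P n1) n_in ns x (Suc l) t) i = fst (snn_st (mkP P n1) n_in ns x (Suc 0) t) i"
  using assms(1)
proof (induction l arbitrary: t)
  case 0 then show ?case by simp
next
  case (Suc l)
  show ?case
  proof (cases t)
    case 0 then show ?thesis by (simp only: snn_st.simps(2) fst_conv)
  next
    case (Suc t')
    let ?Q = "mkP P n1"
    define spv where "spv = fst (snn_st ?Q n_in ns x (Suc l) (Suc t'))"
    have "Suc l \<le> length ns" using Suc.prems by simp
    then have ih: "spv i = fst (snn_st ?Q n_in ns x (Suc 0) (Suc t')) i"
      unfolding spv_def by (rule Suc.IH)
    have w: "i < width n_in ns (Suc l)"
    proof -
      have "l < length ns" using Suc.prems by simp
      then have "ns ! l \<in> set ns" by simp
      then show ?thesis using assms(2,3) by (auto simp: width_def)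
    qed
    have s: "(\<Sum>j<width n_in ns (Suc l). snn_W ?Q (Suc (Suc l)) i j * spv j) = spv i"
    proof -
      have "(\<Sum>j<width n_in ns (Suc l). snn_W ?Q (Suc (Suc l)) i j * spv j) =
            (\<Sum>j<width n_in ns (Suc l). if j = i then spv j else 0)"
        using assms(3) by (intro sum.cong) (auto simp: mkP_def)
      also have "\<dots> = spv i" using w by simp
      finally show ?thesis .
    qed
    have s2: "(\<Sum>j<width n_in ns (Suc l). (if i = j \<and> i < n1 then 1 else 0) * spv j) = spv i"
      using s by (simp add: mkP_def)
    have v01: "spv i \<in> {0, 1}" unfolding ih by (rule layer1_01)
    have "fst (snn_st ?Q n_in ns x (Suc (Suc l)) (Suc t')) i = heaviside (spv i - 1)"
      unfolding st_step[of ?Q n_in ns x "Suc l" t'] spv_def[symmetric]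
      by (simp add: stepf_def Let_def mkP_def s2)
    also have "\<dots> = spv i" using v01 by (auto simp: heaviside_def)
    finally show ?thesis using ih Suc by simp
  qed
qed


definition bitv :: "snn_params \<Rightarrow> nat \<Rightarrow> real list \<Rightarrow> nat \<Rightarrow> nat \<Rightarrow> nat" where
  "bitv P n_in x t j = (if sp (snn_beta P 1) (snn_thr P 1) (snn_u0 P 1 j) (zin P n_in x j) t then 1 else 0)"

lemma sum_if_less:
  fixes g :: "nat \<Rightarrow> real"
  assumes "n1 \<le> L"
  shows "(\<Sum>j<L. (if j < n1 then g j else 0)) = (\<Sum>j<n1. g j)"
proof -
  have "(\<Sum>j<L. (if j < n1 then g j else 0)) = sum g {j \<in> {..<L}. j < n1}"
    by (rule sum.inter_filter[symmetric]) simp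
  also have "{j \<in> {..<L}. j < n1} = {..<n1}" using assms by auto
  finally show ?thesis .
qed

lemma mkP_output0:
  assumes ne: "ns \<noteq> []" and hd: "\<forall>n\<in>set ns. hd ns \<le> n" and no: "n_out \<ge> 1"
  shows "snn_output (mkP P (hd ns)) n_in ns n_out T x 0 =
         real (\<Sum>t<T. (2 ^ hd ns) ^ t * (\<Sum>j<hd ns. 2 ^ j * bitv P n_in x t j))"
proof -
  let ?Q = "mkP P (hd ns)"
  let ?n1 = "hd ns"
  have ll: "?n1 \<le> last ns" using hd ne by simp
  have sL: "fst (snn_st ?Q n_in ns x (length ns) (Suc t)) j = real (bitv P n_in x t j)"
    if "j < ?n1" for t j
  proof -
    obtain l where L: "length ns = Suc l" using ne by (cases ns) auto
    have "fst (snn_st ?Q n_in ns x (length ns) (Suc t)) j = fst (snn_st ?Q n_in ns x (Suc 0) (Suc t)) j"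
      unfolding L using mkP_ident[of l ns "?n1" j P n_in x "Suc t"] L hd that by simp
    also have "\<dots> = real (bitv P n_in x t j)"
      by (simp only: layer1 mkP_sel mkP_zin bitv_def) simp
    finally show ?thesis .
  qed
  have "snn_output ?Q n_in ns n_out T x 0 =
        (\<Sum>t = 1..T. snn_a ?Q t * ((\<Sum>j<last ns. snn_V ?Q 0 j * fst (snn_st ?Q n_in ns x (length ns) t) j) + snn_c ?Q 0))"
    unfolding snn_output_def using no by simp
  also have "\<dots> = (\<Sum>t<T. snn_a ?Q (Suc t) * ((\<Sum>j<last ns. snn_V ?Q 0 j * fst (snn_st ?Q n_in ns x (length ns) (Suc t)) j) + snn_c ?Q 0))"
    by (rule sum_bounds_lt_plus1[symmetric])
  also have "\<dots> = (\<Sum>t<T. (2 ^ ?n1) ^ t * (\<Sum>j<?n1. 2 ^ j * real (bitv P n_in x t j)))"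
  proof (rule sum.cong)
    fix t assume "t \<in> {..<T}"
    have "(\<Sum>j<last ns. snn_V ?Q 0 j * fst (snn_st ?Q n_in ns x (length ns) (Suc t)) j) =
          (\<Sum>j<last ns. (if j < ?n1 then 2 ^ j * real (bitv P n_in x t j) else 0))"
      using sL by (intro sum.cong) (auto simp: mkP_def)
    also have "\<dots> = (\<Sum>j<?n1. 2 ^ j * real (bitv P n_in x t j))" using ll by (rule sum_if_less)
    finally show "snn_a ?Q (Suc t) * ((\<Sum>j<last ns. snn_V ?Q 0 j * fst (snn_st ?Q n_in ns x (length ns) (Suc t)) j) + snn_c ?Q 0) =
       (2 ^ ?n1) ^ t * (\<Sum>j<?n1. 2 ^ j * real (bitv P n_in x t j))" by (simp add: mkP_def)
  qed simp
  also have "\<dots> = real (\<Sum>t<T. (2 ^ ?n1) ^ t * (\<Sum>j<?n1. 2 ^ j * bitv P n_in x t j))"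
    by simp
  finally show ?thesis .
qed

lemma bitv_lt: "bitv P n_in x t j < 2" by (simp add: bitv_def)

lemma mkP_output_inj:
  assumes ne: "ns \<noteq> []" and hd: "\<forall>n\<in>set ns. hd ns \<le> n" and no: "n_out \<ge> 1"
    and eq: "snn_output (mkP P (hd ns)) n_in ns n_out T x = snn_output (mkP P (hd ns)) n_in ns n_out T x'"
  shows "snn_pattern P n_in ns T x = snn_pattern P n_in ns T x'"
proof -
  let ?n1 = "hd ns"
  define D where "D x t = (\<Sum>j<?n1. 2 ^ j * bitv P n_in x t j)" for x t
  have o1: "snn_output (mkP P (hd ns)) n_in ns n_out T x 0 = real (\<Sum>t<T. (2 ^ ?n1) ^ t * D x t)"
    unfolding D_def by (rule mkP_output0[OF ne hd no])
  have o2: "snn_output (mkP P (hd ns)) n_in ns n_out T x' 0 = real (\<Sum>t<T. (2 ^ ?n1) ^ t * D x' t)"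
    unfolding D_def by (rule mkP_output0[OF ne hd no])
  have "real (\<Sum>t<T. (2 ^ ?n1) ^ t * D x t) = real (\<Sum>t<T. (2 ^ ?n1) ^ t * D x' t)"
  proof -
    have "snn_output (mkP P (hd ns)) n_in ns n_out T x 0 = snn_output (mkP P (hd ns)) n_in ns n_out T x' 0"
      using eq by (rule fun_cong)
    then show ?thesis unfolding o1 o2 .
  qed
  then have e1: "(\<Sum>t<T. (2 ^ ?n1) ^ t * D x t) = (\<Sum>t<T. (2 ^ ?n1) ^ t * D x' t)" by (simp only: of_nat_eq_iff)
  have Dlt: "D y t < 2 ^ ?n1" for y t unfolding D_def
    using digits_lt[of ?n1 "bitv P n_in y t" 2] bitv_lt by blast
  have "\<forall>t<T. D x t = D x' t" using digits_inj[of T "D x" "2 ^ ?n1" "D x'"] e1 Dlt by blast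
  then have bits: "bitv P n_in x t j = bitv P n_in x' t j" if "t < T" "j < ?n1" for t j
  proof -
    have "(\<Sum>j<?n1. 2 ^ j * bitv P n_in x t j) = (\<Sum>j<?n1. 2 ^ j * bitv P n_in x' t j)"
      using \<open>\<forall>t<T. D x t = D x' t\<close> that unfolding D_def by simp
    then have "\<forall>j<?n1. bitv P n_in x t j = bitv P n_in x' t j"
      using digits_inj[of ?n1 "bitv P n_in x t" 2 "bitv P n_in x' t"] bitv_lt by blast
    then show ?thesis using that by simp
  qed
  show ?thesis unfolding pattern_eq
  proof (intro ext)
    fix t i
    show "(if 1 \<le> t \<and> t \<le> T \<and> i < hd ns then if sp (snn_beta P 1) (snn_thr P 1) (snn_u0 P 1 i) (zin P n_in x i) (t - 1) then 1 else 0 else 0) =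
          (if 1 \<le> t \<and> t \<le> T \<and> i < hd ns then if sp (snn_beta P 1) (snn_thr P 1) (snn_u0 P 1 i) (zin P n_in x' i) (t - 1) then 1 else 0 else 0)"
    proof (cases "1 \<le> t \<and> t \<le> T \<and> i < hd ns")
      case True
      then have "t - 1 < T" by arith
      then have "bitv P n_in x (t - 1) i = bitv P n_in x' (t - 1) i" using bits True by blast
      then have "sp (snn_beta P 1) (snn_thr P 1) (snn_u0 P 1 i) (zin P n_in x i) (t - 1) \<longleftrightarrow>
                 sp (snn_beta P 1) (snn_thr P 1) (snn_u0 P 1 i) (zin P n_in x' i) (t - 1)"
        unfolding bitv_def by (cases "sp (snn_beta P 1) (snn_thr P 1) (snn_u0 P 1 i) (zin P n_in x i) (t - 1)";
                               cases "sp (snn_beta P 1) (snn_thr P 1) (snn_u0 P 1 i) (zin P n_in x' i) (t - 1)") auto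
      then show ?thesis by (simp only:)
    next
      case False
      then show ?thesis by (simp only: if_not_P[OF False] if_False)
    qed
  qed
qed


lemma nu11: "nu 1 1 u0 z t = u0 + real t * z - real (cnt 1 1 u0 z t)"
  by (induction t) (auto simp: sp_def algebra_simps)

lemma floor_step:
  fixes u0 z :: real and t :: nat
  assumes "0 \<le> u0" "u0 < 1"
  defines "A \<equiv> u0 + real t * z"
  shows "min (Suc t) (nat \<lfloor>A + z\<rfloor>) =
         min t (nat \<lfloor>A\<rfloor>) + (if 1 \<le> A + z - real (min t (nat \<lfloor>A\<rfloor>)) then 1 else 0)"
proof (cases "z < 0")
  case True
  have "real t * z \<le> 0" using True by (simp add: mult_nonneg_nonpos)
  then have "A < 1" "A + z < 1" using assms True unfolding A_def by linarith+
  then have "\<lfloor>A\<rfloor> \<le> 0" "\<lfloor>A + z\<rfloor> \<le> 0" by (simp_all add: floor_le_iff)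
  then show ?thesis using \<open>A + z < 1\<close> by simp
next
  case False
  show ?thesis
  proof (cases "z \<ge> 1")
    case True
    have "real t * z \<ge> real t" using True by (metis mult.right_neutral mult_left_mono of_nat_0_le_iff)
    then have "A \<ge> real t" using assms unfolding A_def by linarith
    then have f1: "\<lfloor>A\<rfloor> \<ge> int t" by (simp add: le_floor_iff)
    have "A + z \<ge> real t + 1" using \<open>A \<ge> real t\<close> True by linarith
    then have f2: "\<lfloor>A + z\<rfloor> \<ge> int t + 1" by (simp add: le_floor_iff)
    have m1: "min t (nat \<lfloor>A\<rfloor>) = t" using f1 by simp
    have m2: "min (Suc t) (nat \<lfloor>A + z\<rfloor>) = Suc t" using f2 by simp
    show ?thesis unfolding m1 m2 using \<open>A + z \<ge> real t + 1\<close> by simp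
  next
    case False2: False
    have z01: "0 \<le> z" "z < 1" using False False2 by auto
    have "real t * z \<le> real t" using z01 by (simp add: mult_left_le)
    moreover have "0 \<le> real t * z" using z01 by simp
    ultimately have A1: "0 \<le> A" "A < real t + 1" using assms unfolding A_def by linarith+
    have fA: "0 \<le> \<lfloor>A\<rfloor>" "\<lfloor>A\<rfloor> \<le> int t" using A1 by (simp_all add: floor_le_iff)
    have "A + z < real t + 2" using A1 z01 by linarith
    then have fB: "\<lfloor>A + z\<rfloor> \<le> int t + 1" by (simp add: floor_le_iff)
    have fB2: "\<lfloor>A\<rfloor> \<le> \<lfloor>A + z\<rfloor>" using z01 by (intro floor_mono) simp
    have fB3: "\<lfloor>A + z\<rfloor> \<le> \<lfloor>A\<rfloor> + 1"
    proof -
      have "A < real_of_int \<lfloor>A\<rfloor> + 1" by (rule real_of_int_floor_add_one_gt)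
      moreover have "real_of_int (\<lfloor>A\<rfloor> + 2) = real_of_int \<lfloor>A\<rfloor> + 2" by simp
      ultimately have "A + z < real_of_int (\<lfloor>A\<rfloor> + 2)" using z01 by linarith
      then have "\<lfloor>A + z\<rfloor> < \<lfloor>A\<rfloor> + 2" by (simp only: floor_less_iff)
      then show ?thesis by linarith
    qed
    have m1: "min t (nat \<lfloor>A\<rfloor>) = nat \<lfloor>A\<rfloor>" using fA by simp
    have m2: "min (Suc t) (nat \<lfloor>A + z\<rfloor>) = nat \<lfloor>A + z\<rfloor>" using fB by simp
    have c: "(1 \<le> A + z - real (nat \<lfloor>A\<rfloor>)) \<longleftrightarrow> \<lfloor>A\<rfloor> + 1 \<le> \<lfloor>A + z\<rfloor>"
    proof -
      have "real (nat \<lfloor>A\<rfloor>) = real_of_int \<lfloor>A\<rfloor>" using fA by simp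
      then have "(1 \<le> A + z - real (nat \<lfloor>A\<rfloor>)) \<longleftrightarrow> real_of_int (\<lfloor>A\<rfloor> + 1) \<le> A + z" by (simp; arith)
      also have "\<dots> \<longleftrightarrow> \<lfloor>A\<rfloor> + 1 \<le> \<lfloor>A + z\<rfloor>" by (rule le_floor_iff[symmetric])
      finally show ?thesis .
    qed
    show ?thesis
    proof (cases "\<lfloor>A\<rfloor> + 1 \<le> \<lfloor>A + z\<rfloor>")
      case True
      then have e: "\<lfloor>A + z\<rfloor> = \<lfloor>A\<rfloor> + 1" using fB3 by linarith
      have "nat (\<lfloor>A\<rfloor> + 1) = nat \<lfloor>A\<rfloor> + 1" using fA(1) by (simp add: nat_add_distrib)
      then show ?thesis using True e c m1 m2 by simp
    next
      case False
      then have e: "\<lfloor>A + z\<rfloor> = \<lfloor>A\<rfloor>" using fB2 by linarith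
      then show ?thesis using False c m1 m2 by simp
    qed
  qed
qed

lemma cnt11:
  assumes "0 \<le> u0" "u0 < 1"
  shows "cnt 1 1 u0 z t = min t (nat \<lfloor>u0 + real t * z\<rfloor>)"
proof (induction t)
  case 0
  have "\<lfloor>u0\<rfloor> = 0" using assms by (simp add: floor_eq_iff)
  then show ?case by simp
next
  case (Suc t)
  have sp: "sp 1 1 u0 z t \<longleftrightarrow> 1 \<le> u0 + real t * z + z - real (min t (nat \<lfloor>u0 + real t * z\<rfloor>))"
    unfolding sp_def nu11 Suc by (simp add: algebra_simps)
  have e: "u0 + real (Suc t) * z = u0 + real t * z + z" by (simp add: algebra_simps)
  have "cnt 1 1 u0 z (Suc t) = min t (nat \<lfloor>u0 + real t * z\<rfloor>) +
     (if 1 \<le> u0 + real t * z + z - real (min t (nat \<lfloor>u0 + real t * z\<rfloor>)) then 1 else 0)"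
    using Suc sp by simp
  also have "\<dots> = min (Suc t) (nat \<lfloor>u0 + real t * z + z\<rfloor>)"
    using floor_step[OF assms, of t z] by simp
  finally show ?case unfolding e .
qed

lemma card_le_floor:
  fixes a :: real
  shows "card {j \<in> {1..t}. real j \<le> a} = min t (nat \<lfloor>a\<rfloor>)"
proof -
  have "{j \<in> {1..t}. real j \<le> a} = {1..min t (nat \<lfloor>a\<rfloor>)}"
  proof (intro set_eqI iffI)
    fix j assume "j \<in> {j \<in> {1..t}. real j \<le> a}"
    then have "1 \<le> j" "j \<le> t" "int j \<le> \<lfloor>a\<rfloor>" by (auto simp: le_floor_iff)
    then show "j \<in> {1..min t (nat \<lfloor>a\<rfloor>)}" by auto
  next
    fix j assume "j \<in> {1..min t (nat \<lfloor>a\<rfloor>)}"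
    then have "1 \<le> j" "j \<le> t" "int j \<le> \<lfloor>a\<rfloor>" by auto
    then show "j \<in> {j \<in> {1..t}. real j \<le> a}" by (auto simp: le_floor_iff)
  qed
  then show ?thesis by simp
qed

definition u0T :: "nat \<Rightarrow> real" where "u0T T = 1 / (real T + 2)"

definition Cset :: "nat \<Rightarrow> real set" where
  "Cset T = (\<lambda>(t, j). (real j - u0T T) / real t) ` (SIGMA t:{1..T}. {1..t})"

lemma u0T_bounds: "0 < u0T T" "u0T T < 1" "u0T T * (real T + 2) = 1"
proof -
  have p: "real T + 2 > 0" by simp
  show "0 < u0T T" unfolding u0T_def using p by simp
  show "u0T T < 1" unfolding u0T_def using p by (simp add: divide_less_eq)
  show "u0T T * (real T + 2) = 1" unfolding u0T_def using p by simp
qed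

lemma Cset_inj: "inj_on (\<lambda>(t, j). (real j - u0T T) / real t) (SIGMA t:{1..T}. {1..t})"
proof (rule inj_onI, clarify)
  fix t j t' j' :: nat
  assume h: "t \<in> {1..T}" "j \<in> {1..t}" "t' \<in> {1..T}" "j' \<in> {1..t'}"
    and eq: "(real j - u0T T) / real t = (real j' - u0T T) / real t'"
  have tp: "real t > 0" "real t' > 0" using h by auto
  have e: "(real j - u0T T) * real t' = (real j' - u0T T) * real t" using eq tp by (simp add: field_simps)
  then have e2: "real_of_int (int j * int t' - int j' * int t) = u0T T * (real t' - real t)"
    by (simp add: algebra_simps)
  have "\<bar>real t' - real t\<bar> < real T + 2" using h by auto
  then have "\<bar>u0T T * (real t' - real t)\<bar> < 1"
  proof -
    have "\<bar>u0T T * (real t' - real t)\<bar> = u0T T * \<bar>real t' - real t\<bar>"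
      using abs_of_pos[OF u0T_bounds(1)[of T]] by (simp add: abs_mult)
    also have "\<dots> < u0T T * (real T + 2)" using u0T_bounds \<open>\<bar>real t' - real t\<bar> < real T + 2\<close>
      by (intro mult_strict_left_mono) auto
    finally show ?thesis using u0T_bounds by simp
  qed
  then have "\<bar>real_of_int (int j * int t' - int j' * int t)\<bar> < 1" using e2 by simp
  then have "int j * int t' - int j' * int t = 0" by linarith
  then have "u0T T * (real t' - real t) = 0" using e2 by simp
  then have "t = t'" using u0T_bounds(1)[of T] by simp
  then show "t = t' \<and> j = j'" using e tp by simp
qed

lemma card_Cset: "card (Cset T) = T * (T + 1) div 2"
proof -
  have "card (Cset T) = card (SIGMA t:{1..T}. {1..t})" unfolding Cset_def using Cset_inj by (rule card_image)
  also have "\<dots> = (\<Sum>t\<in>{1..T}. card {1..t})" by (rule card_SigmaI) auto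
  also have "\<dots> = (\<Sum>t\<in>{1..T}. t)" by simp
  also have "\<dots> = (\<Sum>t\<in>{0..T}. t)" by (simp add: sum_shift_lb_Suc0_0)
  also have "\<dots> = T * (T + 1) div 2" using gauss_sum_nat[of T] by simp
  finally show ?thesis .
qed

lemma Cset_sub: "c \<in> Cset T \<Longrightarrow> 0 < c \<and> c < 1"
  unfolding Cset_def
proof clarify
  fix t j assume h: "t \<in> {1..T}" "j \<in> {1..t}"
  have jj: "1 \<le> real j" "real j \<le> real t" using h by auto
  have "real j - u0T T > 0" using jj u0T_bounds(2)[of T] by linarith
  moreover have "real j - u0T T < real t" using jj u0T_bounds(1)[of T] by linarith
  ultimately show "0 < (real j - u0T T) / real t \<and> (real j - u0T T) / real t < 1" using h by auto
qed

lemma fin_Cset: "finite (Cset T)" unfolding Cset_def by auto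

lemma lam_Cset: "card {c \<in> Cset T. c \<le> z} = (\<Sum>t\<in>{1..T}. cnt 1 1 (u0T T) z t)"
proof -
  let ?g = "\<lambda>(t, j). (real j - u0T T) / real t"
  let ?S = "SIGMA t:{1..T}. {1..t}"
  have "{c \<in> Cset T. c \<le> z} = ?g ` {p \<in> ?S. ?g p \<le> z}" unfolding Cset_def by auto
  then have "card {c \<in> Cset T. c \<le> z} = card {p \<in> ?S. ?g p \<le> z}"
    using Cset_inj by (metis (no_types, lifting) card_image inj_on_subset mem_Collect_eq subsetI)
  also have "{p \<in> ?S. ?g p \<le> z} = (SIGMA t:{1..T}. {j \<in> {1..t}. real j \<le> u0T T + real t * z})"
  proof (intro set_eqI iffI)
    fix p assume "p \<in> {p \<in> ?S. ?g p \<le> z}"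
    then obtain t j where p: "p = (t, j)" "t \<in> {1..T}" "j \<in> {1..t}" "(real j - u0T T) / real t \<le> z" by auto
    then have "real j - u0T T \<le> z * real t" by (simp add: divide_le_eq)
    then show "p \<in> (SIGMA t:{1..T}. {j \<in> {1..t}. real j \<le> u0T T + real t * z})" using p by (auto simp: algebra_simps)
  next
    fix p assume "p \<in> (SIGMA t:{1..T}. {j \<in> {1..t}. real j \<le> u0T T + real t * z})"
    then obtain t j where p: "p = (t, j)" "t \<in> {1..T}" "j \<in> {1..t}" "real j \<le> u0T T + real t * z" by auto
    then have "real j - u0T T \<le> z * real t" by (simp add: algebra_simps)
    then have "(real j - u0T T) / real t \<le> z" using p by (simp add: divide_le_eq)
    then show "p \<in> {p \<in> ?S. ?g p \<le> z}" using p by auto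
  qed
  also have "card \<dots> = (\<Sum>t\<in>{1..T}. card {j \<in> {1..t}. real j \<le> u0T T + real t * z})"
    by (rule card_SigmaI) auto
  also have "\<dots> = (\<Sum>t\<in>{1..T}. cnt 1 1 (u0T T) z t)"
  proof (rule sum.cong)
    fix t
    have u: "0 \<le> u0T T" using u0T_bounds(1) by (rule less_imp_le)
    show "card {j \<in> {1..t}. real j \<le> u0T T + real t * z} = cnt 1 1 (u0T T) z t"
      by (simp only: card_le_floor cnt11[OF u u0T_bounds(2)])
  qed simp
  finally show ?thesis .
qed


definition Apin :: "'a set \<Rightarrow> (nat \<Rightarrow> 'a \<Rightarrow> real) \<Rightarrow> (nat \<times> real) list \<Rightarrow> 'a set" where
  "Apin D f ps = {y \<in> D. \<forall>p\<in>set ps. f (fst p) y = snd p}"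

definition lamC :: "real set \<Rightarrow> real \<Rightarrow> nat" where
  "lamC C v = card {c \<in> C. c \<le> v}"

definition Rm :: "real set \<Rightarrow> (nat \<Rightarrow> 'a \<Rightarrow> real) \<Rightarrow> nat \<Rightarrow> 'a set \<Rightarrow> nat list set" where
  "Rm C f m E = (\<lambda>y. map (\<lambda>i. lamC C (f i y)) [0..<m]) ` E"

lemma lamC_le: "finite C \<Longrightarrow> lamC C v \<le> card C"
  unfolding lamC_def by (intro card_mono) auto

lemma lamC_mono: "finite C \<Longrightarrow> v \<le> w \<Longrightarrow> lamC C v \<le> lamC C w"
  unfolding lamC_def by (intro card_mono) auto

lemma lamC_strict:
  assumes "finite C" "c \<in> C" "v < c"
  shows "lamC C v < lamC C c"
proof -
  have s: "{c' \<in> C. c' \<le> v} \<subseteq> {c' \<in> C. c' \<le> c}" using assms by auto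
  have "c \<in> {c' \<in> C. c' \<le> c}" "c \<notin> {c' \<in> C. c' \<le> v}" using assms by auto
  then have "{c' \<in> C. c' \<le> v} \<subset> {c' \<in> C. c' \<le> c}" using s by blast
  then show ?thesis unfolding lamC_def using assms(1) by (intro psubset_card_mono) auto
qed

lemma fin_Rm: "finite C \<Longrightarrow> finite (Rm C f m E)"
proof -
  assume C: "finite C"
  have "Rm C f m E \<subseteq> range (\<lambda>y. map (\<lambda>i. lamC C (f i y)) [0..<m])" unfolding Rm_def by auto
  moreover have "finite (range (\<lambda>y. map (\<lambda>i. lamC C (f i y)) [0..<m]))"
    using lamC_le[OF C] by (intro fin_tuples[where K="card C"]) auto
  ultimately show ?thesis by (rule finite_subset)
qed

lemma Apin_Cons: "Apin D f (p # ps) = {y \<in> Apin D f ps. f (fst p) y = snd p}"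
  unfolding Apin_def by auto

lemma LB:
  fixes D :: "'a set" and f :: "nat \<Rightarrow> 'a \<Rightarrow> real" and C :: "real set" and d :: nat
  assumes finC: "finite C"
    and H1: "\<And>ps. distinct (map fst ps) \<Longrightarrow> set ps \<subseteq> UNIV \<times> C \<Longrightarrow> length ps \<le> d \<Longrightarrow> Apin D f ps \<noteq> {}"
    and H2: "\<And>ps m y c. distinct (map fst ps) \<Longrightarrow> (\<forall>p\<in>set ps. m < fst p) \<Longrightarrow> set ps \<subseteq> UNIV \<times> C \<Longrightarrow>
               length ps < d \<Longrightarrow> c \<in> C \<Longrightarrow> y \<in> Apin D f ps \<Longrightarrow> f m y = c \<Longrightarrow>
               \<exists>y'\<in>Apin D f ps. f m y' < c \<and> (\<forall>i<m. lamC C (f i y') = lamC C (f i y))"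
  shows "distinct (map fst ps) \<Longrightarrow> (\<forall>p\<in>set ps. m \<le> fst p) \<Longrightarrow> set ps \<subseteq> UNIV \<times> C \<Longrightarrow> length ps \<le> d \<Longrightarrow>
         NN (card C) (d - length ps) m \<le> card (Rm C f m (Apin D f ps))"
proof (induction m arbitrary: ps)
  case 0
  have "Apin D f ps \<noteq> {}" using H1 0 by blast
  then have "Rm C f 0 (Apin D f ps) = {[]}" unfolding Rm_def by auto
  then show ?case by (simp add: NN_n0)
next
  case (Suc m)
  let ?K = "card C"
  define E where "E = Apin D f ps"
  have Ene: "E \<noteq> {}" unfolding E_def using H1 Suc.prems by blast
  show ?case
  proof (cases "length ps = d")
    case True
    have "Rm C f (Suc m) E \<noteq> {}" using Ene unfolding Rm_def by auto
    then have "1 \<le> card (Rm C f (Suc m) E)" using fin_Rm[OF finC] by (simp add: Suc_le_eq card_gt_0_iff)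
    then show ?thesis using True by (simp add: NN_d0 E_def)
  next
    case False
    have lenlt: "length ps < d" using False Suc.prems(4) by simp
    then obtain d' where d': "d - length ps = Suc d'" using Suc.prems(4) by (metis Suc_diff_Suc le_neq_implies_less)
    define tup where "tup y = map (\<lambda>i. lamC C (f i y)) [0..<m]" for y
    define S' where "S' = tup ` E"
    have S'R: "S' = Rm C f m E" unfolding S'_def Rm_def tup_def ..
    have finS': "finite S'" unfolding S'R by (rule fin_Rm[OF finC])
    define V where "V \<tau> = {lamC C (f m y) | y. y \<in> E \<and> tup y = \<tau>}" for \<tau>
    have finV: "finite (V \<tau>)" for \<tau>
      by (rule finite_subset[of _ "{0..?K}"]) (auto simp: V_def lamC_le[OF finC])
    define Rc where "Rc c = Rm C f m (Apin D f ((m, c) # ps))" for c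
    define Ks where "Ks \<tau> = {c \<in> C. \<tau> \<in> Rc c}" for \<tau>
    have RSuc: "Rm C f (Suc m) E = (\<Union>\<tau>\<in>S'. (\<lambda>v. \<tau> @ [v]) ` V \<tau>)"
    proof (intro set_eqI iffI)
      fix w assume "w \<in> Rm C f (Suc m) E"
      then obtain y where y: "y \<in> E" "w = tup y @ [lamC C (f m y)]" unfolding Rm_def tup_def by auto
      then show "w \<in> (\<Union>\<tau>\<in>S'. (\<lambda>v. \<tau> @ [v]) ` V \<tau>)" unfolding S'_def V_def by blast
    next
      fix w assume "w \<in> (\<Union>\<tau>\<in>S'. (\<lambda>v. \<tau> @ [v]) ` V \<tau>)"
      then obtain \<tau> v where "\<tau> \<in> S'" "v \<in> V \<tau>" "w = \<tau> @ [v]" by auto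
      then obtain y where y: "y \<in> E" "tup y = \<tau>" "v = lamC C (f m y)" unfolding V_def by auto
      then have "w = map (\<lambda>i. lamC C (f i y)) [0..<Suc m]" using \<open>w = \<tau> @ [v]\<close> unfolding tup_def by simp
      then show "w \<in> Rm C f (Suc m) E" unfolding Rm_def using y(1) by blast
    qed
    have cardR: "card (Rm C f (Suc m) E) = (\<Sum>\<tau>\<in>S'. card (V \<tau>))"
    proof -
      have "card (\<Union>\<tau>\<in>S'. (\<lambda>v. \<tau> @ [v]) ` V \<tau>) = (\<Sum>\<tau>\<in>S'. card ((\<lambda>v. \<tau> @ [v]) ` V \<tau>))"
        using finS' finV by (intro card_UN_disjoint) auto
      also have "\<dots> = (\<Sum>\<tau>\<in>S'. card (V \<tau>))"
        by (intro sum.cong refl card_image) (auto simp: inj_on_def)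
      finally show ?thesis unfolding RSuc .
    qed
    have key: "1 + card (Ks \<tau>) \<le> card (V \<tau>)" if "\<tau> \<in> S'" for \<tau>
    proof (cases "Ks \<tau> = {}")
      case True
      have "V \<tau> \<noteq> {}" using that unfolding S'_def V_def by auto
      then show ?thesis using True finV by (simp add: Suc_le_eq card_gt_0_iff)
    next
      case False
      have finK: "finite (Ks \<tau>)" unfolding Ks_def using finC by auto
      define c0 where "c0 = Min (Ks \<tau>)"
      have c0K: "c0 \<in> Ks \<tau>" unfolding c0_def using finK False by simp
      have c0le: "c0 \<le> c" if "c \<in> Ks \<tau>" for c unfolding c0_def using finK that by simp
      have c0C: "c0 \<in> C" using c0K unfolding Ks_def by simp
      obtain y0 where y0: "y0 \<in> Apin D f ((m, c0) # ps)" "tup y0 = \<tau>"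
        using c0K unfolding Ks_def Rc_def Rm_def tup_def by auto
      have y0E: "y0 \<in> E" "f m y0 = c0" using y0 unfolding E_def Apin_Cons by auto
      have pins: "\<forall>p\<in>set ps. m < fst p" using Suc.prems(2) by (auto simp: Suc_le_eq)
      from lenlt obtain y' where y': "y' \<in> E" "f m y' < c0" "\<forall>i<m. lamC C (f i y') = lamC C (f i y0)"
        using H2[OF Suc.prems(1) pins Suc.prems(3) _ c0C _ y0E(2)] y0E(1) unfolding E_def by blast
      have ty': "tup y' = \<tau>" using y'(3) y0(2) unfolding tup_def by (auto intro!: map_cong)
      have in1: "lamC C (f m y') \<in> V \<tau>" using y'(1) ty' unfolding V_def by auto
      have in2: "lamC C ` Ks \<tau> \<subseteq> V \<tau>"
      proof
        fix v assume "v \<in> lamC C ` Ks \<tau>"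
        then obtain c where c: "c \<in> Ks \<tau>" "v = lamC C c" by auto
        then obtain yc where "yc \<in> Apin D f ((m, c) # ps)" "tup yc = \<tau>"
          unfolding Ks_def Rc_def Rm_def tup_def by auto
        then show "v \<in> V \<tau>" unfolding V_def E_def Apin_Cons using c by auto
      qed
      have notin: "lamC C (f m y') \<notin> lamC C ` Ks \<tau>"
      proof
        assume "lamC C (f m y') \<in> lamC C ` Ks \<tau>"
        then obtain c where c: "c \<in> Ks \<tau>" "lamC C (f m y') = lamC C c" by auto
        have "lamC C (f m y') < lamC C c0" using lamC_strict[OF finC c0C y'(2)] .
        also have "\<dots> \<le> lamC C c" using lamC_mono[OF finC c0le[OF c(1)]] .
        finally show False using c(2) by simp
      qed
      have inj: "inj_on (lamC C) (Ks \<tau>)"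
      proof (rule inj_onI)
        fix a b assume ab: "a \<in> Ks \<tau>" "b \<in> Ks \<tau>" "lamC C a = lamC C b"
        have aC: "a \<in> C" and bC: "b \<in> C" using ab unfolding Ks_def by auto
        show "a = b"
        proof (rule ccontr)
          assume "a \<noteq> b"
          then have "a < b \<or> b < a" by linarith
          then show False using lamC_strict[OF finC aC, of b] lamC_strict[OF finC bC, of a] ab(3) by auto
        qed
      qed
      have "card (insert (lamC C (f m y')) (lamC C ` Ks \<tau>)) = 1 + card (Ks \<tau>)"
        using notin finK inj by (simp add: card_image)
      moreover have "card (insert (lamC C (f m y')) (lamC C ` Ks \<tau>)) \<le> card (V \<tau>)"
        using in1 in2 finV by (intro card_mono) auto
      ultimately show ?thesis by simp
    qed
    have IH1: "NN ?K (Suc d') m \<le> card S'"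
    proof -
      have "NN ?K (d - length ps) m \<le> card (Rm C f m (Apin D f ps))"
        using Suc.IH[of ps] Suc.prems by (auto simp: Suc_le_eq less_imp_le)
      then show ?thesis unfolding S'R E_def d' .
    qed
    have IH2: "NN ?K d' m \<le> card (Rc c)" if "c \<in> C" for c
    proof -
      have pins: "\<forall>p\<in>set ps. m < fst p" using Suc.prems(2) by (auto simp: Suc_le_eq)
      have "distinct (map fst ((m, c) # ps))" using Suc.prems(1) pins by auto
      moreover have "\<forall>p\<in>set ((m, c) # ps). m \<le> fst p" using pins by (auto simp: less_imp_le)
      moreover have "set ((m, c) # ps) \<subseteq> UNIV \<times> C" using Suc.prems(3) that by auto
      moreover have "length ((m, c) # ps) \<le> d" using lenlt by simp
      ultimately have "NN ?K (d - length ((m, c) # ps)) m \<le> card (Rm C f m (Apin D f ((m, c) # ps)))"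
        by (rule Suc.IH)
      moreover have "d - length ((m, c) # ps) = d'" using d' by simp
      ultimately show ?thesis unfolding Rc_def by simp
    qed
    have RcS: "Rc c \<subseteq> S'" for c unfolding Rc_def S'R Rm_def E_def Apin_Cons by auto
    have "NN ?K (Suc d') (Suc m) = NN ?K (Suc d') m + ?K * NN ?K d' m" by (rule NN_rec)
    also have "\<dots> \<le> card S' + (\<Sum>c\<in>C. card (Rc c))"
    proof -
      have "?K * NN ?K d' m = (\<Sum>c\<in>C. NN ?K d' m)" by simp
      also have "\<dots> \<le> (\<Sum>c\<in>C. card (Rc c))" using IH2 by (intro sum_mono) auto
      finally show ?thesis using IH1 by simp
    qed
    also have "(\<Sum>c\<in>C. card (Rc c)) = (\<Sum>c\<in>C. card {\<tau> \<in> S'. c \<in> C \<and> \<tau> \<in> Rc c})"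
      using RcS by (intro sum.cong refl arg_cong[where f=card]) auto
    also have "\<dots> = (\<Sum>\<tau>\<in>S'. card {c \<in> C. c \<in> C \<and> \<tau> \<in> Rc c})"
      using finS' finC by (rule card_swap[symmetric])
    also have "\<dots> = (\<Sum>\<tau>\<in>S'. card (Ks \<tau>))" unfolding Ks_def by simp
    also have "card S' + (\<Sum>\<tau>\<in>S'. card (Ks \<tau>)) = (\<Sum>\<tau>\<in>S'. 1 + card (Ks \<tau>))"
      by (simp only: sum.distrib card_eq_sum)
    also have "\<dots> \<le> (\<Sum>\<tau>\<in>S'. card (V \<tau>))" using key by (intro sum_mono) auto
    also have "\<dots> = card (Rm C f (Suc m) E)" using cardR by simp
    finally show ?thesis unfolding d' E_def .
  qed
qed


definition DP :: "nat \<Rightarrow> real poly set" where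
  "DP d = {q. \<forall>j\<ge>d. coeff q j = 0}"

definition fP :: "nat \<Rightarrow> nat \<Rightarrow> real poly \<Rightarrow> real" where
  "fP d i q = (real d + 1) * (poly q (real i) - real i ^ d)"

definition prodlin :: "nat set \<Rightarrow> real poly" where
  "prodlin N = (\<Prod>l\<in>N. [:- real l, 1:])"

lemma poly_prodlin: "poly (prodlin N) x = (\<Prod>l\<in>N. x - real l)"
  unfolding prodlin_def by (simp add: poly_prod)

lemma degree_prodlin: "finite N \<Longrightarrow> degree (prodlin N) = card N"
  unfolding prodlin_def by (subst degree_prod_eq_sum_degree) auto

lemma coeff_prodlin_high: "finite N \<Longrightarrow> card N < k \<Longrightarrow> coeff (prodlin N) k = 0"
  using degree_prodlin by (simp add: coeff_eq_0)

lemma coeff_prodlin_top: "finite N \<Longrightarrow> coeff (prodlin N) (card N) = 1"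
proof -
  assume N: "finite N"
  have "lead_coeff (prodlin N) = (\<Prod>l\<in>N. lead_coeff [:- real l, 1:])"
    unfolding prodlin_def by (rule lead_coeff_prod)
  also have "\<dots> = 1" by simp
  finally show ?thesis using degree_prodlin[OF N] by simp
qed

lemma prodlin_zero: "finite N \<Longrightarrow> i \<in> N \<Longrightarrow> poly (prodlin N) (real i) = 0"
  unfolding poly_prodlin by (rule prod_zero) auto

lemma prodlin_nonzero: "finite N \<Longrightarrow> i \<notin> N \<Longrightarrow> poly (prodlin N) (real i) \<noteq> 0"
  unfolding poly_prodlin by (subst prod_zero_iff) auto

lemma interp:
  assumes "finite N" "card N \<le> d"
  shows "\<exists>q\<in>DP d. \<forall>i\<in>N. poly q (real i) = val i"
  using assms
proof (induction N rule: finite_induct)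
  case empty
  show ?case by (rule bexI[of _ 0]) (auto simp: DP_def)
next
  case (insert k N)
  then obtain q where q: "q \<in> DP d" "\<forall>i\<in>N. poly q (real i) = val i" by auto
  define w where "w = prodlin N"
  have wk: "poly w (real k) \<noteq> 0" unfolding w_def using insert prodlin_nonzero by blast
  define q' where "q' = q + smult ((val k - poly q (real k)) / poly w (real k)) w"
  have "q' \<in> DP d"
    unfolding DP_def mem_Collect_eq
  proof (intro allI impI)
    fix j assume "d \<le> j"
    moreover have "card N < d" using insert by simp
    ultimately have "coeff w j = 0" unfolding w_def using coeff_prodlin_high insert by simp
    then show "coeff q' j = 0" using q \<open>d \<le> j\<close> unfolding q'_def DP_def by simp
  qed
  moreover have "\<forall>i\<in>insert k N. poly q' (real i) = val i"
  proof
    fix i assume "i \<in> insert k N"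
    then show "poly q' (real i) = val i"
    proof
      assume "i = k" then show ?thesis unfolding q'_def using wk by simp
    next
      assume "i \<in> N"
      then have "poly w (real i) = 0" unfolding w_def using prodlin_zero insert by blast
      then show ?thesis unfolding q'_def using q \<open>i \<in> N\<close> by simp
    qed
  qed
  ultimately show ?case by blast
qed

lemma lagrange_top:
  fixes r :: "real poly"
  assumes N: "finite N" "card N = Suc d" and r: "\<forall>k>d. coeff r k = 0"
  shows "coeff r d = (\<Sum>j\<in>N. poly r (real j) / (\<Prod>l\<in>N - {j}. real j - real l))"
proof -
  define cf where "cf j = poly r (real j) / (\<Prod>l\<in>N - {j}. real j - real l)" for j
  define L where "L = (\<Sum>j\<in>N. smult (cf j) (prodlin (N - {j})))"
  have cardj: "card (N - {j}) = d" if "j \<in> N" for j using N that by simp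
  have pne: "(\<Prod>l\<in>N - {j}. real j - real l) \<noteq> 0" for j
    using N by (subst prod_zero_iff) auto
  have polyL: "poly L (real i) = poly r (real i)" if "i \<in> N" for i
  proof -
    have "poly L (real i) = (\<Sum>j\<in>N. cf j * poly (prodlin (N - {j})) (real i))"
      unfolding L_def by (simp add: poly_sum)
    also have "\<dots> = cf i * poly (prodlin (N - {i})) (real i) + (\<Sum>j\<in>N - {i}. cf j * poly (prodlin (N - {j})) (real i))"
      using N that by (simp add: sum.remove)
    also have "(\<Sum>j\<in>N - {i}. cf j * poly (prodlin (N - {j})) (real i)) = 0"
      using N that by (intro sum.neutral) (auto simp: prodlin_zero)
    also have "cf i * poly (prodlin (N - {i})) (real i) = poly r (real i)"
      unfolding cf_def poly_prodlin using pne[of i] by simp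
    finally show ?thesis by simp
  qed
  have coeffL: "coeff L k = (\<Sum>j\<in>N. cf j * coeff (prodlin (N - {j})) k)" for k
    unfolding L_def by (simp add: coeff_sum)
  have Lhigh: "coeff L k = 0" if "k > d" for k
    unfolding coeffL using N that cardj by (intro sum.neutral) (auto simp: coeff_prodlin_high)
  have "r = L"
  proof (rule ccontr)
    assume ne: "r \<noteq> L"
    then have nz: "r - L \<noteq> 0" by simp
    have "degree (r - L) \<le> d"
      by (rule degree_le) (use r Lhigh in auto)
    moreover have "card (real ` N) \<le> card {x. poly (r - L) x = 0}"
    proof (rule card_mono)
      show "finite {x. poly (r - L) x = 0}" using nz by (rule poly_roots_finite)
      show "real ` N \<subseteq> {x. poly (r - L) x = 0}" using polyL by auto
    qed
    moreover have "card {x. poly (r - L) x = 0} \<le> degree (r - L)" using nz by (rule card_poly_roots_bound)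
    moreover have "card (real ` N) = Suc d" using N by (simp add: card_image)
    ultimately show False by linarith
  qed
  then have "coeff r d = (\<Sum>j\<in>N. cf j * coeff (prodlin (N - {j})) d)" using coeffL by simp
  also have "\<dots> = (\<Sum>j\<in>N. cf j)"
    using N by (intro sum.cong refl) (metis cardj coeff_prodlin_top finite_Diff mult.right_neutral)
  finally show ?thesis unfolding cf_def .
qed

lemma gp:
  assumes q: "q \<in> DP d" and N: "finite N" and f01: "\<forall>i\<in>N. 0 < fP d i q \<and> fP d i q < 1"
  shows "card N \<le> d"
proof (rule ccontr)
  assume "\<not> card N \<le> d"
  then have "Suc d \<le> card N" by simp
  then obtain N' where N': "N' \<subseteq> N" "card N' = Suc d" "finite N'" by (rule obtain_subset_with_card_n)
  define s where "s = real d + 1"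
  have s0: "s > 0" unfolding s_def by simp
  define r where "r = monom 1 d - q"
  have rh: "\<forall>k>d. coeff r k = 0" using q unfolding r_def DP_def by (auto simp: coeff_monom)
  have rd: "coeff r d = 1" using q unfolding r_def DP_def by (simp add: coeff_monom)
  have pr: "poly r (real j) = - fP d j q / s" for j
    unfolding r_def fP_def s_def by (simp add: poly_monom field_simps)
  have pr_abs: "\<bar>poly r (real j)\<bar> < 1 / s" if "j \<in> N'" for j
  proof -
    have "0 < fP d j q" "fP d j q < 1" using f01 N'(1) that by auto
    then show ?thesis unfolding pr using s0 by (simp add: abs_divide divide_strict_right_mono)
  qed
  have pabs: "1 \<le> \<bar>\<Prod>l\<in>N' - {j}. real j - real l\<bar>" for j
    unfolding abs_prod
  proof (rule prod_ge_1)
    fix l assume "l \<in> N' - {j}"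
    then have "l \<noteq> j" by auto
    then show "1 \<le> \<bar>real j - real l\<bar>" by linarith
  qed
  have "1 = coeff r d" using rd by simp
  also have "\<dots> = (\<Sum>j\<in>N'. poly r (real j) / (\<Prod>l\<in>N' - {j}. real j - real l))"
    by (rule lagrange_top[OF N'(3) N'(2) rh])
  also have "\<dots> \<le> (\<Sum>j\<in>N'. \<bar>poly r (real j) / (\<Prod>l\<in>N' - {j}. real j - real l)\<bar>)"
    by (intro sum_mono abs_ge_self)
  also have "\<dots> \<le> (\<Sum>j\<in>N'. \<bar>poly r (real j)\<bar>)"
  proof (intro sum_mono)
    fix j
    have "\<bar>poly r (real j)\<bar> / \<bar>\<Prod>l\<in>N' - {j}. real j - real l\<bar> \<le> \<bar>poly r (real j)\<bar> / 1"
      using pabs[of j] by (intro divide_left_mono) auto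
    then show "\<bar>poly r (real j) / (\<Prod>l\<in>N' - {j}. real j - real l)\<bar> \<le> \<bar>poly r (real j)\<bar>"
      by (simp add: abs_divide)
  qed
  also have "\<dots> < (\<Sum>j\<in>N'. 1 / s)"
    using N' pr_abs by (intro sum_strict_mono) auto
  also have "\<dots> = 1" using N' unfolding s_def by simp
  finally show False by simp
qed


lemma exists_small:
  fixes g :: "'b \<Rightarrow> real"
  assumes "finite X" "\<forall>x\<in>X. 0 < g x"
  shows "\<exists>\<delta>>0. \<forall>x\<in>X. \<delta> < g x"
proof (cases "X = {}")
  case True then show ?thesis by (intro exI[of _ 1]) auto
next
  case False
  define m where "m = Min (g ` X)"
  have "m \<in> g ` X" unfolding m_def using assms False by simp
  then have m0: "0 < m" using assms by auto
  have "m \<le> g x" if "x \<in> X" for x unfolding m_def using assms that by simp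
  then show ?thesis using m0 by (intro exI[of _ "m / 2"]) force
qed

lemma lamC_stable:
  assumes "\<forall>c\<in>C. \<bar>w - v\<bar> < \<bar>v - c\<bar>"
  shows "lamC C w = lamC C v"
proof -
  have "{c \<in> C. c \<le> w} = {c \<in> C. c \<le> v}"
  proof (intro set_eqI iffI)
    fix c assume "c \<in> {c \<in> C. c \<le> w}"
    then have "c \<in> C" "c \<le> w" by auto
    then show "c \<in> {c \<in> C. c \<le> v}" using assms by force
  next
    fix c assume "c \<in> {c \<in> C. c \<le> v}"
    then have "c \<in> C" "c \<le> v" by auto
    then show "c \<in> {c \<in> C. c \<le> w}" using assms by force
  qed
  then show ?thesis unfolding lamC_def by simp
qed

lemma fP_diff: "fP d i (q - smult \<delta> p) = fP d i q - (real d + 1) * \<delta> * poly p (real i)"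
  unfolding fP_def by (simp add: algebra_simps)

context
  fixes C :: "real set" and d :: nat
  assumes finC: "finite C" and C01: "\<forall>c\<in>C. 0 < c \<and> c < 1"
begin

lemma H1_inst:
  assumes "distinct (map fst ps)" "set ps \<subseteq> UNIV \<times> C" "length ps \<le> d"
  shows "Apin (DP d) (fP d) ps \<noteq> {}"
proof -
  define s where "s = real d + 1"
  have s0: "s > 0" unfolding s_def by simp
  define N where "N = fst ` set ps"
  have cardN: "card N = length ps" unfolding N_def using assms(1) by (metis distinct_card set_map length_map)
  define val where "val i = real i ^ d + the (map_of ps i) / s" for i
  obtain q where q: "q \<in> DP d" "\<forall>i\<in>N. poly q (real i) = val i"
    using interp[of N d val] cardN assms(3) unfolding N_def by auto
  have "q \<in> Apin (DP d) (fP d) ps"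
    unfolding Apin_def
  proof (intro CollectI conjI ballI q(1))
    fix p assume p: "p \<in> set ps"
    have "map_of ps (fst p) = Some (snd p)" using assms(1) p by (intro map_of_is_SomeI) auto
    moreover have "poly q (real (fst p)) = val (fst p)" using q(2) p unfolding N_def by auto
    ultimately show "fP d (fst p) q = snd p" unfolding fP_def val_def s_def[symmetric] using s0 by simp
  qed
  then show ?thesis by auto
qed

lemma H2_inst:
  assumes dist: "distinct (map fst ps)" and pins: "\<forall>p\<in>set ps. m < fst p" and psC: "set ps \<subseteq> UNIV \<times> C"
    and len: "length ps < d" and cC: "c \<in> C" and qA: "q \<in> Apin (DP d) (fP d) ps" and fm: "fP d m q = c"
  shows "\<exists>y'\<in>Apin (DP d) (fP d) ps. fP d m y' < c \<and> (\<forall>i<m. lamC C (fP d i y') = lamC C (fP d i q))"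
proof -
  define s where "s = real d + 1"
  have s0: "s > 0" unfolding s_def by simp
  have qD: "q \<in> DP d" using qA unfolding Apin_def by simp
  have qpins: "fP d (fst p) q = snd p" if "p \<in> set ps" for p using qA that unfolding Apin_def by simp
  define S where "S = {i. i < m \<and> fP d i q \<in> C} \<union> fst ` set ps"
  have finS: "finite S" unfolding S_def by auto
  have mS: "m \<notin> S" unfolding S_def using pins by auto
  have "card (insert m S) \<le> d"
  proof (rule gp[OF qD])
    show "finite (insert m S)" using finS by simp
    show "\<forall>i\<in>insert m S. 0 < fP d i q \<and> fP d i q < 1"
    proof
      fix i assume "i \<in> insert m S"
      then have "fP d i q \<in> C"
      proof (cases "i = m")
        case True then show ?thesis using fm cC by simp
      next
        case False
        then have "i \<in> S" using \<open>i \<in> insert m S\<close> by simp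
        then show ?thesis unfolding S_def
        proof
          assume "i \<in> {i. i < m \<and> fP d i q \<in> C}" then show ?thesis by simp
        next
          assume "i \<in> fst ` set ps"
          then obtain p where "p \<in> set ps" "i = fst p" by auto
          then show ?thesis using qpins psC by force
        qed
      qed
      then show "0 < fP d i q \<and> fP d i q < 1" using C01 by simp
    qed
  qed
  then have cS: "card S < d" using finS mS by simp
  define p0 where "p0 = prodlin S"
  have p0m: "poly p0 (real m) \<noteq> 0" unfolding p0_def using prodlin_nonzero finS mS by blast
  define p' where "p' = smult (1 / poly p0 (real m)) p0"
  have p'm: "poly p' (real m) = 1" unfolding p'_def using p0m by simp
  have p'S: "poly p' (real i) = 0" if "i \<in> S" for i unfolding p'_def p0_def using prodlin_zero finS that by simp
  have p'hi: "coeff p' k = 0" if "d \<le> k" for k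
    unfolding p'_def p0_def using coeff_prodlin_high[OF finS] cS that by simp
  define X where "X = {i. i < m \<and> fP d i q \<notin> C} \<times> C"
  define g where "g x = \<bar>fP d (fst x) q - snd x\<bar> / (s * (\<bar>poly p' (real (fst x))\<bar> + 1))" for x
  have finX: "finite X" unfolding X_def using finC by auto
  have gpos: "\<forall>x\<in>X. 0 < g x"
  proof
    fix x assume "x \<in> X"
    then have "fP d (fst x) q \<noteq> snd x" unfolding X_def by auto
    then show "0 < g x" unfolding g_def using s0 by (intro divide_pos_pos) auto
  qed
  obtain \<delta> where \<delta>: "\<delta> > 0" "\<forall>x\<in>X. \<delta> < g x" using exists_small[OF finX gpos] by blast
  define y' where "y' = q - smult \<delta> p'"
  have fy': "fP d i y' = fP d i q - s * \<delta> * poly p' (real i)" for i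
    unfolding y'_def fP_diff s_def ..
  have y'D: "y' \<in> DP d" using qD p'hi unfolding DP_def y'_def by simp
  have y'A: "y' \<in> Apin (DP d) (fP d) ps"
    unfolding Apin_def
  proof (intro CollectI conjI ballI y'D)
    fix p assume "p \<in> set ps"
    then have "fst p \<in> S" unfolding S_def by auto
    then show "fP d (fst p) y' = snd p" using fy' p'S qpins \<open>p \<in> set ps\<close> by simp
  qed
  have "fP d m y' < c" using fy'[of m] p'm fm s0 \<delta>(1) by simp
  moreover have "lamC C (fP d i y') = lamC C (fP d i q)" if "i < m" for i
  proof (cases "fP d i q \<in> C")
    case True
    then have "i \<in> S" unfolding S_def using that by simp
    then show ?thesis using fy' p'S by simp
  next
    case False
    show ?thesis
    proof (rule lamC_stable, intro ballI)
      fix c' assume c': "c' \<in> C"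
      then have "(i, c') \<in> X" unfolding X_def using False that by simp
      then have dl: "\<delta> < g (i, c')" using \<delta>(2) by blast
      define a where "a = \<bar>poly p' (real i)\<bar>"
      have "\<bar>fP d i y' - fP d i q\<bar> = s * \<delta> * a" unfolding fy' a_def using s0 \<delta>(1) by (simp add: abs_mult)
      also have "\<dots> \<le> s * \<delta> * (a + 1)" using s0 \<delta>(1) by simp
      also have "\<dots> < s * g (i, c') * (a + 1)"
        using dl s0 unfolding a_def by (intro mult_strict_right_mono mult_strict_left_mono) auto
      also have "\<dots> = \<bar>fP d i q - c'\<bar>"
      proof -
        have nz: "s * (a + 1) \<noteq> 0" using s0 unfolding a_def by (simp add: add_nonneg_pos)
        have "s * g (i, c') * (a + 1) = (s * (a + 1)) * (\<bar>fP d i q - c'\<bar> / (s * (a + 1)))"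
          unfolding g_def a_def by (simp add: algebra_simps)
        also have "\<dots> = \<bar>fP d i q - c'\<bar>" using nz by simp
        finally show ?thesis .
      qed
      finally show "\<bar>fP d i y' - fP d i q\<bar> < \<bar>fP d i q - c'\<bar>" .
    qed
  qed
  ultimately show ?thesis using y'A by blast
qed

lemma LB_poly: "NN (card C) d m \<le> card (Rm C (fP d) m (DP d))"
proof -
  have "NN (card C) (d - length ([] :: (nat \<times> real) list)) m \<le> card (Rm C (fP d) m (Apin (DP d) (fP d) []))"
  proof (rule LB[OF finC])
    show "\<And>ps. distinct (map fst ps) \<Longrightarrow> set ps \<subseteq> UNIV \<times> C \<Longrightarrow> length ps \<le> d \<Longrightarrow> Apin (DP d) (fP d) ps \<noteq> {}"
      by (rule H1_inst)
    show "\<And>ps m y c. distinct (map fst ps) \<Longrightarrow> (\<forall>p\<in>set ps. m < fst p) \<Longrightarrow> set ps \<subseteq> UNIV \<times> C \<Longrightarrow>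
               length ps < d \<Longrightarrow> c \<in> C \<Longrightarrow> y \<in> Apin (DP d) (fP d) ps \<Longrightarrow> fP d m y = c \<Longrightarrow>
               \<exists>y'\<in>Apin (DP d) (fP d) ps. fP d m y' < c \<and> (\<forall>i<m. lamC C (fP d i y') = lamC C (fP d i y))"
      by (rule H2_inst)
  qed auto
  moreover have "Apin (DP d) (fP d) [] = DP d" unfolding Apin_def by simp
  ultimately show ?thesis by simp
qed

end


lemma poly_DP:
  assumes "q \<in> DP d"
  shows "poly q t = (\<Sum>j<d. coeff q j * t ^ j)"
proof (cases "q = 0")
  case True
  then show ?thesis by simp
next
  case False
  have dq: "degree q < d"
  proof (rule ccontr)
    assume "\<not> degree q < d"
    then have "coeff q (degree q) = 0" using assms unfolding DP_def by simp
    then show False using False by simp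
  qed
  have "poly q t = (\<Sum>j\<le>degree q. coeff q j * t ^ j)" by (rule poly_altdef)
  also have "\<dots> = (\<Sum>j<d. coeff q j * t ^ j)"
  proof (rule sum.mono_neutral_left)
    show "{..degree q} \<subseteq> {..<d}" using dq by auto
    show "\<forall>j\<in>{..<d} - {..degree q}. coeff q j * t ^ j = 0" by (auto simp: coeff_eq_0)
  qed simp
  finally show ?thesis .
qed

definition PLB :: "nat \<Rightarrow> nat \<Rightarrow> snn_params" where
  "PLB n_in T = \<lparr> snn_W = (\<lambda>l i j. if l = 1 then (real n_in + 1) * real i ^ j else 0),
     snn_b = (\<lambda>l i. if l = 1 then - ((real n_in + 1) * real i ^ n_in) else 0),
     snn_u0 = (\<lambda>l i. if l = 1 then u0T T else 0),
     snn_beta = (\<lambda>l. if l = 1 then 1 else 0),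
     snn_thr = (\<lambda>l. 1),
     snn_a = (\<lambda>_. 0), snn_V = (\<lambda>_ _. 0), snn_c = (\<lambda>_. 0) \<rparr>"

lemma PLB_valid: "snn_valid ns (PLB n_in T)"
  unfolding snn_valid_def PLB_def by auto

lemma PLB_zin:
  assumes "q \<in> DP n_in"
  shows "zin (PLB n_in T) n_in (map (coeff q) [0..<n_in]) i = fP n_in i q"
proof -
  have "zin (PLB n_in T) n_in (map (coeff q) [0..<n_in]) i =
        (\<Sum>j<n_in. (real n_in + 1) * real i ^ j * coeff q j) - (real n_in + 1) * real i ^ n_in"
    unfolding zin_def PLB_def by simp
  also have "\<dots> = (real n_in + 1) * ((\<Sum>j<n_in. coeff q j * real i ^ j) - real i ^ n_in)"
    by (simp add: sum_distrib_left algebra_simps)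
  also have "\<dots> = fP n_in i q" unfolding fP_def poly_DP[OF assms] ..
  finally show ?thesis .
qed

lemma sp_eq_cnt_eq:
  assumes "\<forall>k<T. sp b th u0 z k = sp b th u0 z' k" "t \<le> T"
  shows "cnt b th u0 z t = cnt b th u0 z' t"
  using assms(2)
proof (induction t)
  case 0 then show ?case by simp
next
  case (Suc t)
  then show ?case using assms(1) by simp
qed

lemma PLB_lower:
  assumes ne: "ns \<noteq> []"
  shows "NN (KK T) n_in (hd ns) \<le> card (activation_regions (PLB n_in T) n_in ns T)"
proof -
  let ?P = "PLB n_in T"
  let ?C = "Cset T"
  let ?n1 = "hd ns"
  define LT where "LT x = map (\<lambda>i. lamC ?C (zin ?P n_in x i)) [0..<?n1]" for x
  have cardC: "card ?C = KK T" unfolding KK_def by (rule card_Cset)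
  have "NN (KK T) n_in ?n1 \<le> card (Rm ?C (fP n_in) ?n1 (DP n_in))"
    using LB_poly[OF fin_Cset, of T n_in ?n1] Cset_sub cardC by auto
  also have "\<dots> \<le> card (LT ` snn_inputs n_in)"
  proof (rule card_mono)
    have "LT ` snn_inputs n_in \<subseteq> {xs. set xs \<subseteq> {0..card ?C} \<and> length xs = ?n1}"
      unfolding LT_def using lamC_le[OF fin_Cset] by auto
    then show "finite (LT ` snn_inputs n_in)" by (rule finite_subset) (simp add: finite_lists_length_eq)
    show "Rm ?C (fP n_in) ?n1 (DP n_in) \<subseteq> LT ` snn_inputs n_in"
    proof
      fix w assume "w \<in> Rm ?C (fP n_in) ?n1 (DP n_in)"
      then obtain q where q: "q \<in> DP n_in" "w = map (\<lambda>i. lamC ?C (fP n_in i q)) [0..<?n1]"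
        unfolding Rm_def by auto
      have "w = LT (map (coeff q) [0..<n_in])" unfolding LT_def q(2) PLB_zin[OF q(1)] ..
      moreover have "map (coeff q) [0..<n_in] \<in> snn_inputs n_in" unfolding snn_inputs_def by simp
      ultimately show "w \<in> LT ` snn_inputs n_in" by blast
    qed
  qed
  also have "\<dots> \<le> card (snn_pattern ?P n_in ns T ` snn_inputs n_in)"
  proof (rule card_factor)
    show "finite (snn_pattern ?P n_in ns T ` snn_inputs n_in)" by (rule finite_patterns)
    fix x y assume eq: "snn_pattern ?P n_in ns T x = snn_pattern ?P n_in ns T y"
    have "lamC ?C (zin ?P n_in x i) = lamC ?C (zin ?P n_in y i)" if i: "i < ?n1" for i
    proof -
      have "sp 1 1 (u0T T) (zin ?P n_in x i) k = sp 1 1 (u0T T) (zin ?P n_in y i) k" if k: "k < T" for k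
      proof -
        have "snn_pattern ?P n_in ns T x (Suc k) i = snn_pattern ?P n_in ns T y (Suc k) i" using eq by simp
        then show ?thesis unfolding pattern_eq using i k by (simp add: PLB_def split: if_splits)
      qed
      then have "cnt 1 1 (u0T T) (zin ?P n_in x i) t = cnt 1 1 (u0T T) (zin ?P n_in y i) t" if "t \<in> {1..T}" for t
      proof -
        have "t \<le> T" using that by simp
        then show ?thesis
          using sp_eq_cnt_eq[of T 1 1 "u0T T" "zin ?P n_in x i" "zin ?P n_in y i" t] \<open>\<And>k. k < T \<Longrightarrow> _\<close> by blast
      qed
      then show ?thesis unfolding lamC_def lam_Cset by (intro sum.cong) auto
    qed
    then show "LT x = LT y" unfolding LT_def by (intro map_cong) auto
  qed
  finally show ?thesis unfolding act_card .
qed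

lemma KK_real: "real (KK T) = (real T ^ 2 + real T) / 2"
proof -
  have "even (T * (T + 1))" by simp
  then have "2 * (T * (T + 1) div 2) = T * (T + 1)" by simp
  then have "2 * real (T * (T + 1) div 2) = real T * (real T + 1)" by (metis of_nat_mult of_nat_numeral of_nat_Suc add.commute of_nat_add of_nat_1)
  then show ?thesis unfolding KK_def by (simp add: power2_eq_square algebra_simps)
qed

lemma region_bound_NN: "region_bound T n_in n1 = real (NN (KK T) n_in n1)"
proof (cases "n1 \<ge> n_in")
  case True
  have "real (NN (KK T) n_in n1) = (\<Sum>i\<le>n_in. real (KK T) ^ i * real (n1 choose i))"
    unfolding NN_def by simp
  also have "\<dots> = (\<Sum>i=0..n_in. ((real T ^ 2 + real T) / 2) ^ i * real (n1 choose i))"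
    unfolding KK_real by (simp add: atMost_atLeast0)
  finally show ?thesis unfolding region_bound_def using True by simp
next
  case False
  have "NN (KK T) n_in n1 = (\<Sum>j\<le>n1. KK T ^ j * (n1 choose j))"
    unfolding NN_def
  proof (rule sum.mono_neutral_right)
    show "{..n1} \<subseteq> {..n_in}" using False by auto
    show "\<forall>i\<in>{..n_in} - {..n1}. KK T ^ i * (n1 choose i) = 0" by auto
  qed simp
  also have "\<dots> = (KK T + 1) ^ n1"
  proof -
    have "(KK T + 1) ^ n1 = (\<Sum>k\<le>n1. of_nat (n1 choose k) * KK T ^ k * 1 ^ (n1 - k))"
      by (rule binomial_ring)
    then show ?thesis by (simp add: mult.commute)
  qed
  finally have "real (NN (KK T) n_in n1) = (real (KK T) + 1) ^ n1" by (simp add: add.commute)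
  also have "\<dots> = ((real T ^ 2 + real T + 2) / 2) ^ n1" unfolding KK_real by (simp add: field_simps)
  finally show ?thesis unfolding region_bound_def using False by simp
qed


theorem theoremB19:
  fixes T n_in n_out :: nat and ns :: "nat list"
  assumes "ns \<noteq> []" and "n_out \<ge> 1"
  shows "max_constant_regions n_in ns n_out T \<le> max_activation_regions n_in ns T
       \<and> real (max_activation_regions n_in ns T) \<le> region_bound T n_in (hd ns)
       \<and> ((\<forall>n\<in>set ns. hd ns \<le> n) \<longrightarrow>
            max_constant_regions n_in ns n_out T = max_activation_regions n_in ns T)
       \<and> (\<exists>P. snn_valid ns P \<and>
            real (card (activation_regions P n_in ns T)) = region_bound T n_in (hd ns))"
proof -
  note ne = assms(1)
  define B where "B = NN (KK T) n_in (hd ns)"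
  define SA where "SA = {card (activation_regions P n_in ns T) | P. snn_valid ns P}"
  define SC where "SC = {card (constant_regions P n_in ns n_out T) | P. snn_valid ns P}"
  have mA: "max_activation_regions n_in ns T = Max SA" unfolding max_activation_regions_def SA_def ..
  have mC: "max_constant_regions n_in ns n_out T = Max SC" unfolding max_constant_regions_def SC_def ..
  have ubA: "card (activation_regions P n_in ns T) \<le> B" if "snn_valid ns P" for P
  proof -
    have "1 \<in> {1..length ns}" using ne by (cases ns) auto
    then have "0 \<le> snn_beta P 1" "snn_beta P 1 \<le> 1" "0 < snn_thr P 1" using that unfolding snn_valid_def by auto
    then show ?thesis unfolding B_def by (intro upper) (auto simp del: One_nat_def)
  qed
  have CA: "card (constant_regions P n_in ns n_out T) \<le> card (activation_regions P n_in ns T)" for P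
    using const_le_act[OF ne] .
  have "SA \<subseteq> {..B}"
  proof
    fix x assume "x \<in> SA"
    then obtain P where "snn_valid ns P" "x = card (activation_regions P n_in ns T)" unfolding SA_def by blast
    then show "x \<in> {..B}" using ubA by simp
  qed
  then have finA: "finite SA" by (rule finite_subset) simp
  have "SC \<subseteq> {..B}"
  proof
    fix x assume "x \<in> SC"
    then obtain P where P: "snn_valid ns P" "x = card (constant_regions P n_in ns n_out T)" unfolding SC_def by blast
    have "x \<le> card (activation_regions P n_in ns T)" using P(2) CA[of P] by simp
    also have "\<dots> \<le> B" using ubA[OF P(1)] .
    finally show "x \<in> {..B}" by simp
  qed
  then have finC: "finite SC" by (rule finite_subset) simp
  have neA: "SA \<noteq> {}" unfolding SA_def using PLB_valid by blast
  have neC: "SC \<noteq> {}" unfolding SC_def using PLB_valid by blast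
  have c1: "Max SC \<le> Max SA"
  proof -
    have "Max SC \<in> SC" using finC neC by simp
    then obtain P where P: "snn_valid ns P" "Max SC = card (constant_regions P n_in ns n_out T)" unfolding SC_def by auto
    have "card (activation_regions P n_in ns T) \<in> SA" unfolding SA_def using P by auto
    then have "card (activation_regions P n_in ns T) \<le> Max SA" using finA by simp
    then show ?thesis using P CA[of P] by simp
  qed
  have c2: "Max SA \<le> B"
  proof -
    have "Max SA \<in> SA" using finA neA by simp
    then show ?thesis unfolding SA_def using ubA by auto
  qed
  have c3: "Max SC = Max SA" if hd: "\<forall>n\<in>set ns. hd ns \<le> n"
  proof -
    have "Max SA \<in> SA" using finA neA by simp
    then obtain P where P: "snn_valid ns P" "Max SA = card (activation_regions P n_in ns T)" unfolding SA_def by auto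
    define Q where "Q = mkP P (hd ns)"
    have Qv: "snn_valid ns Q" unfolding Q_def using P(1) by (rule mkP_valid)
    have patQ: "snn_pattern Q n_in ns T = snn_pattern P n_in ns T" unfolding Q_def by (rule mkP_pattern)
    have finO: "finite (snn_output Q n_in ns n_out T ` snn_inputs n_in)"
    proof (rule finite_factor[OF finite_patterns[of Q n_in ns T]])
      fix x y assume "snn_pattern Q n_in ns T x = snn_pattern Q n_in ns T y"
      then show "snn_output Q n_in ns n_out T x = snn_output Q n_in ns n_out T y"
        by (rule same_pattern_output[OF _ ne])
    qed
    have "card (snn_pattern Q n_in ns T ` snn_inputs n_in) \<le> card (snn_output Q n_in ns n_out T ` snn_inputs n_in)"
    proof (rule card_factor[OF finO])
      fix x y assume "snn_output Q n_in ns n_out T x = snn_output Q n_in ns n_out T y"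
      then have "snn_pattern P n_in ns T x = snn_pattern P n_in ns T y"
        unfolding Q_def by (rule mkP_output_inj[OF ne hd assms(2)])
      then show "snn_pattern Q n_in ns T x = snn_pattern Q n_in ns T y" unfolding patQ .
    qed
    then have "card (activation_regions Q n_in ns T) \<le> card (constant_regions Q n_in ns n_out T)"
      unfolding act_card const_card .
    moreover have "card (activation_regions Q n_in ns T) = Max SA" unfolding act_card patQ P(2) act_card ..
    moreover have "card (constant_regions Q n_in ns n_out T) \<le> Max SC"
      using finC Qv unfolding SC_def by (intro Max_ge) auto
    ultimately show ?thesis using c1 by simp
  qed
  have c4: "card (activation_regions (PLB n_in T) n_in ns T) = B"
    using ubA[OF PLB_valid[of ns n_in T]] PLB_lower[OF ne, of T n_in] unfolding B_def by simp
  show ?thesis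
    unfolding mA mC
  proof (intro conjI impI)
    show "Max SC \<le> Max SA" by (rule c1)
    have rb: "region_bound T n_in (hd ns) = real B" unfolding B_def by (rule region_bound_NN)
    show "real (Max SA) \<le> region_bound T n_in (hd ns)" unfolding rb using c2 by (simp only: of_nat_le_iff)
    show "Max SC = Max SA" if "\<forall>n\<in>set ns. hd ns \<le> n" using c3 that .
    show "\<exists>P. snn_valid ns P \<and> real (card (activation_regions P n_in ns T)) = region_bound T n_in (hd ns)"
    proof (intro exI[of _ "PLB n_in T"] conjI)
      show "snn_valid ns (PLB n_in T)" by (rule PLB_valid)
      show "real (card (activation_regions (PLB n_in T) n_in ns T)) = region_bound T n_in (hd ns)"
        unfolding rb c4 ..
    qed
  qed
qed


end
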